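(* Let $\mathbb{X},\mathbb{Y}$ be finite-dimensional real Hilbert spaces, $f:\mathbb{X}\to(-\infty,\infty]$ and $g:\mathbb{Y}\to(-\infty,\infty]$ proper, convex and lower semicontinuous, $K:\mathbb{X}\to\mathbb{Y}$ linear, and $h:\mathbb{X}\to\mathbb{R}$ convex and differentiable with $\bar L$-Lipschitz gradient. Assume (A1) below holds. Let $\{(z_n,x_n,w_n,y_n,\tau_n)\}$ be generated by the P-GRPDA algorithm described in the context. Then $\{(x_n,y_n)\}$ converges to a saddle point of $\mathbb{L}(x,y):=f(x)+h(x)+\langle Kx,y\rangle-g^*(y)$, i.e., to some $(\hat x,\hat y)$ with $\mathbb{L}(\hat x,y)\le\mathbb{L}(\hat x,\hat y)\le\mathbb{L}(x,\hat y)$ for all $(x,y)\in\mathbb{X}\times\mathbb{Y}$.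
   Context: $\phi=\frac{1+\sqrt5}{2}$; $K^*$ adjoint of $K$; $g^*$ Fenchel conjugate of $g$; $\operatorname{prox}_{\lambda f}(x)=\arg\min_{u}\{f(u)+\frac{1}{2\lambda}\|u-x\|^2\}$. (A1): the saddle point problem $\min_{x}\max_{y}\mathbb{L}(x,y)$ has a nonempty solution set, and $0\in\operatorname{ri}(K(\operatorname{dom}f)-\operatorname{dom}g)$ (ri = relative interior). (The paper also assumes the proximal maps of $f,g$ are efficiently computable.) P-GRPDA: choose $x_0\in\mathbb{X}$, $y_0\in\mathbb{Y}$, set $z_0=x_0$, choose $\beta>0$, $\psi\in(1,\phi]$, $0<2\mu'<\mu<\psi/2$, $\tau_0>0$. For $n=1,2,\dots$: $z_n=\frac{\psi-1}{\psi}x_{n-1}+\frac1\psi z_{n-1}$; $x_n=\operatorname{prox}_{\tau_{n-1}f}\big(z_n-\tau_{n-1}K^*y_{n-1}-\tau_{n-1}\nabla h(x_{n-1})\big)$; $\tau_n=\min\left\{\tau_{n-1},\ \frac{\mu\|x_n-x_{n-1}\|}{\sqrt\beta\|Kx_n-Kx_{n-1}\|},\ \frac{\mu'\|x_n-x_{n-1}\|}{\|\nabla h(x_n)-\nabla h(x_{n-1})\|}\right\}$, $\sigma_n=\beta\tau_n$; $w_n=\operatorname{prox}_{\frac{1}{\sigma_n}g}\big(\frac{y_{n-1}}{\sigma_n}+Kx_n\big)$; $y_n=y_{n-1}+\sigma_n(Kx_n-w_n)$. Conventions in the $\tau_n$ update: $1/0=\infty$ (a term with zero denominator and nonzero numerator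 is ignored) and $0/0=\infty$ (so $\tau_n=\tau_{n-1}$ if $x_n=x_{n-1}$). *)

theory Defs
  imports "HOL-Analysis.Analysis"
begin

text \<open>Extended-real valued functions \<open>f : X \<rightarrow> (-\<infinity>, \<infinity>]\<close> are modelled as maps into ereal
  that never take the value \<open>-\<infinity>\<close> (part of properness).\<close>

definition edom :: "('a \<Rightarrow> ereal) \<Rightarrow> 'a set" where
  "edom f = {x. f x < \<infinity>}"

definition proper_fun :: "('a \<Rightarrow> ereal) \<Rightarrow> bool" where
  "proper_fun f \<longleftrightarrow> (\<forall>x. f x \<noteq> -\<infinity>) \<and> (\<exists>x. f x < \<infinity>)"

definition convex_efun :: "('a::real_vector \<Rightarrow> ereal) \<Rightarrow> bool" where
  "convex_efun f \<longleftrightarrow> convex {(x, r::real). f x \<le> ereal r}"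

definition lsc_efun :: "('a::topological_space \<Rightarrow> ereal) \<Rightarrow> bool" where
  "lsc_efun f \<longleftrightarrow> (\<forall>x. f x \<le> Liminf (at x) f)"

definition fconj :: "('a::real_inner \<Rightarrow> ereal) \<Rightarrow> 'a \<Rightarrow> ereal" where
  "fconj g y = (SUP w. ereal (y \<bullet> w) - g w)"

definition prox :: "real \<Rightarrow> ('a::real_normed_vector \<Rightarrow> ereal) \<Rightarrow> 'a \<Rightarrow> 'a" where
  "prox lam f x = (SOME u. \<forall>v. f u + ereal (norm (u - x)^2 / (2 * lam))
                                \<le> f v + ereal (norm (v - x)^2 / (2 * lam)))"

definition lagr :: "('a \<Rightarrow> ereal) \<Rightarrow> ('a \<Rightarrow> real) \<Rightarrow> ('a \<Rightarrow> 'b::real_inner)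
                    \<Rightarrow> ('b \<Rightarrow> ereal) \<Rightarrow> 'a \<Rightarrow> 'b \<Rightarrow> ereal" where
  "lagr f h K g x y = f x + ereal (h x + K x \<bullet> y) - fconj g y"

definition saddle_point :: "('a \<Rightarrow> ereal) \<Rightarrow> ('a \<Rightarrow> real) \<Rightarrow> ('a \<Rightarrow> 'b::real_inner)
                    \<Rightarrow> ('b \<Rightarrow> ereal) \<Rightarrow> 'a \<Rightarrow> 'b \<Rightarrow> bool" where
  "saddle_point f h K g xh yh \<longleftrightarrow>
     (\<forall>x y. lagr f h K g xh y \<le> lagr f h K g xh yh \<and> lagr f h K g xh yh \<le> lagr f h K g x yh)"

definition golden :: real where "golden = (1 + sqrt 5) / 2"

end

theory Submission
  imports Defs
begin

lemma lsc_seq: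
  fixes f :: "'a::first_countable_topology \<Rightarrow> ereal"
  assumes "lsc_efun f" "X \<longlonglongrightarrow> x" "eventually (\<lambda>k. f (X k) \<le> ereal (B k)) sequentially"
    "B \<longlonglongrightarrow> b"
  shows "f x \<le> ereal b"
proof (rule ccontr)
  assume "\<not> f x \<le> ereal b"
  hence "ereal b < f x" by simp
  then obtain c where c: "ereal b < ereal c" "ereal c < f x" using ereal_dense2 by blast
  have "ereal c < Liminf (at x) f" using c(2) assms(1) unfolding lsc_efun_def
    using order_less_le_trans by blast
  hence "eventually (\<lambda>u. f u > ereal c) (at x)" by (rule less_LiminfD)
  hence "eventually (\<lambda>u. f u > ereal c) (nhds x)" using c(2)
    unfolding eventually_at_filter by (auto elim: eventually_mono)
  hence e1: "eventually (\<lambda>k. f (X k) > ereal c) sequentially"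
    using eventually_compose_filterlim assms(2) by blast
  have "b < c" using c by simp
  hence e2: "eventually (\<lambda>k. B k < c) sequentially" using assms(4) order_tendstoD(2) by blast
  have "eventually (\<lambda>k. False) sequentially"
    using e1 e2 assms(3) by eventually_elim (use order_less_le_trans in fastforce)
  thus False by simp
qed

lemma convex_efun_comb:
  assumes "convex_efun f" "f u \<le> ereal a" "f v \<le> ereal b" "0 \<le> t" "t \<le> 1"
  shows "f ((1 - t) *\<^sub>R u + t *\<^sub>R v) \<le> ereal ((1 - t) * a + t * b)"
proof -
  let ?S = "{(x, r::real). f x \<le> ereal r}"
  have "(u, a) \<in> ?S" "(v, b) \<in> ?S" using assms by auto
  hence "(1 - t) *\<^sub>R (u, a) + t *\<^sub>R (v, b) \<in> ?S"
    using assms(1,4,5) unfolding convex_efun_def convex_def by (metis diff_add_cancel diff_ge_0_iff_ge)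
  thus ?thesis by simp
qed

lemma lsc_bdd_below_cball:
  fixes f :: "'a::euclidean_space \<Rightarrow> ereal"
  assumes lsc: "lsc_efun f" and nm: "\<forall>x. f x \<noteq> -\<infinity>"
  shows "\<exists>m. \<forall>u\<in>cball u0 1. ereal m \<le> f u"
proof (rule ccontr)
  assume "\<not> ?thesis"
  hence "\<forall>k::nat. \<exists>u\<in>cball u0 1. f u < ereal (- real k)" by (meson not_le)
  then obtain U where U: "\<And>k. U k \<in> cball u0 1" "\<And>k. f (U k) < ereal (- real k)" by metis
  have "seq_compact (cball u0 (1::real))" by (simp add: compact_imp_seq_compact)
  then obtain l r where r: "strict_mono r" "(U \<circ> r) \<longlonglongrightarrow> l" using seq_compactE U(1) by metis
  have bnd: "f l \<le> ereal (- real M)" for M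
  proof (rule lsc_seq[OF lsc r(2), where B = "\<lambda>_. - real M"])
    show "\<forall>\<^sub>F k in sequentially. f ((U \<circ> r) k) \<le> ereal (- real M)"
      unfolding eventually_sequentially
    proof (intro exI allI impI)
      fix k assume "M \<le> k"
      hence "M \<le> r k" using seq_suble[OF r(1), of k] by simp
      thus "f ((U \<circ> r) k) \<le> ereal (- real M)" using U(2)[of "r k"]
      proof -
        have "ereal (- real (r k)) \<le> ereal (- real M)" using \<open>M \<le> r k\<close> by simp
        thus ?thesis using U(2)[of "r k"] unfolding comp_def by (meson less_imp_le order_trans)
      qed
    qed
  qed simp
  from bnd[of 0] nm obtain a where a: "f l = ereal a" by (cases "f l") auto
  obtain M :: nat where "- a < real M" using reals_Archimedean2 by blast
  with bnd[of M] a show False by simp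
qed

lemma convex_lower_linear:
  fixes f :: "'a::euclidean_space \<Rightarrow> ereal"
  assumes cv: "convex_efun f" and lsc: "lsc_efun f" and nm: "\<forall>x. f x \<noteq> -\<infinity>"
    and u0: "f u0 = ereal c"
  shows "\<exists>m k. k \<ge> 0 \<and> (\<forall>u. ereal (m - k * norm (u - u0)) \<le> f u)"
proof -
  obtain m where m: "\<forall>u\<in>cball u0 1. ereal m \<le> f u" using lsc_bdd_below_cball[OF lsc nm] by blast
  have mc: "m \<le> c" using m u0 by (metis centre_in_cball ereal_less_eq(3) zero_le_one)
  have "ereal (m - (c - m) * norm (u - u0)) \<le> f u" for u
  proof (cases "norm (u - u0) \<le> 1")
    case True
    hence "ereal m \<le> f u" using m by (simp add: dist_norm norm_minus_commute)
    moreover have "m - (c - m) * norm (u - u0) \<le> m" using mc by simp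
    ultimately show ?thesis by (meson ereal_less_eq(3) order_trans)
  next
    case False
    define d where "d = norm (u - u0)"
    have d1: "d > 1" using False d_def by simp
    show ?thesis
    proof (cases "f u")
      case (real a)
      define t where "t = 1 / d"
      have t: "0 \<le> t" "t \<le> 1" using d1 t_def by auto
      define p where "p = (1 - t) *\<^sub>R u0 + t *\<^sub>R u"
      have "p - u0 = t *\<^sub>R (u - u0)" unfolding p_def by (simp add: algebra_simps)
      moreover have "u \<noteq> u0" using d1 d_def by auto
      ultimately have "norm (p - u0) = 1" using d1 t_def d_def by (simp add: divide_simps)
      hence "ereal m \<le> f p" using m by (simp add: dist_norm norm_minus_commute)
      also have "f p \<le> ereal ((1 - t) * c + t * a)" unfolding p_def
        using convex_efun_comb[OF cv _ _ t] u0 real by simp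
      finally have "m \<le> (1 - t) * c + t * a" by simp
      hence "d * m \<le> d * ((1 - t) * c + t * a)" using d1 by simp
      also have "\<dots> = (d - 1) * c + a" using d1 t_def by (simp add: field_simps)
      finally have "d * m \<le> (d - 1) * c + a" .
      hence "d * m \<le> d*c - c + a" by (simp add: algebra_simps)
      hence "m - (c - m) * d \<le> a" using mc by (simp add: algebra_simps)
      thus ?thesis using real d_def by simp
    qed (use nm in auto)
  qed
  thus ?thesis using mc by (intro exI[of _ m] exI[of _ "c - m"]) auto
qed

lemma amgm_aux:
  fixes k R lam :: real
  assumes "lam > 0"
  shows "k * R \<le> R^2 / (4*lam) + k^2 * lam"
proof -
  have "0 \<le> (R - 2*k*lam)^2" by simp
  hence "4*lam*(k*R) \<le> R^2 + 4*lam*(k^2*lam)" by (simp add: power2_eq_square algebra_simps)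
  hence "(4*lam*(k*R)) / (4*lam) \<le> (R^2 + 4*lam*(k^2*lam)) / (4*lam)"
    using assms by (intro divide_right_mono) auto
  thus ?thesis using assms by (simp add: add_divide_distrib)
qed

lemma prox_exists:
  fixes f :: "'a::euclidean_space \<Rightarrow> ereal"
  assumes pr: "proper_fun f" and cv: "convex_efun f" and lsc: "lsc_efun f" and lam: "lam > 0"
  shows "\<exists>u. \<forall>v. f u + ereal (norm (u - x)^2 / (2*lam)) \<le> f v + ereal (norm (v - x)^2 / (2*lam))"
proof -
  have nm: "\<forall>x. f x \<noteq> -\<infinity>" using pr unfolding proper_fun_def by auto
  obtain u0 where "f u0 < \<infinity>" using pr unfolding proper_fun_def by auto
  then obtain c0 where c0: "f u0 = ereal c0" using nm by (cases "f u0") auto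
  obtain m k where k: "k \<ge> 0" and mk: "\<forall>u. ereal (m - k * norm (u - u0)) \<le> f u"
    using convex_lower_linear[OF cv lsc nm c0] by blast
  define q where "q v = norm (v - x)^2 / (2*lam)" for v
  define F where "F v = f v + ereal (q v)" for v
  define D where "D = norm (x - u0)"
  define C where "C = m - k * D - k^2 * lam"
  have lowF: "ereal (C + q v / 2) \<le> F v" for v
  proof -
    have "norm (v - u0) \<le> norm (v - x) + D" unfolding D_def
      using norm_triangle_ineq[of "v - x" "x - u0"] by simp
    hence "k * norm (v - u0) \<le> k * norm (v - x) + k * D" using k
      by (metis distrib_left mult_left_mono)
    moreover have "k * norm (v - x) \<le> norm (v - x)^2 / (4*lam) + k^2 * lam" by (rule amgm_aux[OF lam])
    moreover have "norm (v - x)^2 / (4*lam) = q v / 2" unfolding q_def by simp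
    ultimately have "C + q v / 2 \<le> m - k * norm (v - u0) + q v" unfolding C_def by linarith
    hence "ereal (C + q v / 2) \<le> ereal (m - k * norm (v - u0)) + ereal (q v)" by simp
    also have "\<dots> \<le> F v" unfolding F_def using mk by (intro add_right_mono) auto
    finally show ?thesis .
  qed
  define I where "I = Inf (range F)"
  have qnn: "q v \<ge> 0" for v unfolding q_def using lam by simp
  have "ereal C \<le> I" unfolding I_def
  proof (rule Inf_greatest)
    fix y assume "y \<in> range F"
    then obtain v where "y = F v" by auto
    have "ereal C \<le> ereal (C + q v / 2)" using qnn[of v] by simp
    thus "ereal C \<le> y" using lowF[of v] \<open>y = F v\<close> by (meson order_trans)
  qed
  moreover have "I \<le> F u0" unfolding I_def by (simp add: Inf_lower)
  moreover have "F u0 = ereal (c0 + q u0)" unfolding F_def c0 by simp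
  ultimately obtain i where i: "I = ereal i" by (cases I) auto
  have "\<exists>v. F v < ereal (i + inverse (real (Suc j)))" for j
  proof -
    have "I < ereal (i + inverse (real (Suc j)))" using i by simp
    thus ?thesis unfolding I_def by (auto simp: Inf_less_iff)
  qed
  then obtain V where V: "\<And>j. F (V j) < ereal (i + inverse (real (Suc j)))" by metis
  define A where "A = 4 * lam * (i + 1 - C)"
  have Vb: "V j \<in> cball x (max 1 A)" for j
  proof -
    have "inverse (real (Suc j)) \<le> 1" by (simp add: inverse_le_1_iff)
    hence "ereal (i + inverse (real (Suc j))) \<le> ereal (i + 1)" by simp
    hence "ereal (C + q (V j) / 2) < ereal (i + 1)" using lowF[of "V j"] V[of j]
      by (meson order_le_less_trans order_less_le_trans)
    hence "q (V j) < 2 * (i + 1 - C)" by simp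
    hence "norm (V j - x)^2 \<le> A" unfolding q_def A_def using lam by (simp add: field_simps)
    hence "norm (V j - x) \<le> max 1 A"
      by (smt (verit, ccfv_SIG) norm_ge_zero power2_eq_square mult_le_cancel_left1)
    thus ?thesis by (simp add: dist_norm norm_minus_commute)
  qed
  have "seq_compact (cball x (max 1 A))" by (simp add: compact_imp_seq_compact)
  then obtain l r where r: "strict_mono r" "(V \<circ> r) \<longlonglongrightarrow> l" using seq_compactE Vb by metis
  have fV: "f (V j) \<le> ereal (i + inverse (real (Suc j)) - q (V j))" for j
  proof (cases "f (V j)")
    case (real a)
    thus ?thesis using V[of j] unfolding F_def by simp
  next
    case PInf
    thus ?thesis using V[of j] unfolding F_def by simp
  qed (use nm in auto)
  have lim1: "((\<lambda>n. inverse (real (Suc n))) \<circ> r) \<longlonglongrightarrow> 0"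
    using LIMSEQ_subseq_LIMSEQ[OF LIMSEQ_inverse_real_of_nat r(1)] .
  have lim2: "(\<lambda>j. q ((V \<circ> r) j)) \<longlonglongrightarrow> q l" unfolding q_def
    by (intro tendsto_intros r(2)) (use lam in auto)
  have "(\<lambda>j. i + ((\<lambda>n. inverse (real (Suc n))) \<circ> r) j - q ((V \<circ> r) j)) \<longlonglongrightarrow> i + 0 - q l"
    by (intro tendsto_intros lim1 lim2)
  hence lim3: "(\<lambda>j. i + inverse (real (Suc (r j))) - q (V (r j))) \<longlonglongrightarrow> i - q l" by simp
  have "f l \<le> ereal (i - q l)"
    by (rule lsc_seq[OF lsc r(2) _ lim3]) (use fV in auto)
  hence "F l \<le> ereal (i - q l) + ereal (q l)" unfolding F_def by (intro add_right_mono)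
  hence Fl: "F l \<le> I" using i by simp
  have "\<forall>v. F l \<le> F v" using Fl unfolding I_def by (meson Inf_lower UNIV_I image_eqI order_trans)
  thus ?thesis unfolding F_def q_def by blast
qed

lemma norm_add_scaled_sq:
  fixes a b :: "'a::real_inner"
  shows "norm (a + t *\<^sub>R b)^2 = norm a^2 + 2 * t * inner a b + t^2 * norm b^2"
  unfolding power2_norm_eq_inner
  by (simp add: inner_add_left inner_add_right inner_commute algebra_simps power2_eq_square)

lemma prox_opt:
  fixes f :: "'a::real_inner \<Rightarrow> ereal"
  assumes pr: "proper_fun f" and cv: "convex_efun f" and lam: "lam > 0"
    and mn: "\<forall>v. f u + ereal (norm (u - x)^2 / (2*lam)) \<le> f v + ereal (norm (v - x)^2 / (2*lam))"
  shows "\<exists>a. f u = ereal a \<and> (\<forall>v. ereal (a + inner (x - u) (v - u) / lam) \<le> f v)"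
proof -
  have nm: "\<forall>x. f x \<noteq> -\<infinity>" using pr unfolding proper_fun_def by auto
  obtain u0 where "f u0 < \<infinity>" using pr unfolding proper_fun_def by auto
  then obtain c0 where c0: "f u0 = ereal c0" using nm by (cases "f u0") auto
  have "f u + ereal (norm (u - x)^2 / (2*lam)) \<le> ereal (c0 + norm (u0 - x)^2 / (2*lam))"
    using mn[rule_format, of u0] c0 by simp
  then obtain a where a: "f u = ereal a" using nm by (cases "f u") auto
  have "ereal (a + inner (x - u) (v - u) / lam) \<le> f v" for v
  proof (cases "f v")
    case PInf thus ?thesis by simp
  next
    case MInf thus ?thesis using nm by simp
  next
    case (real b)
    define N where "N = norm (v - u)^2"
    have N0: "N \<ge> 0" unfolding N_def by simp
    have step: "a - b \<le> (inner (u - x) (v - u) + t / 2 * N) / lam" if t: "0 < t" "t \<le> 1" for t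
    proof -
      define p where "p = (1 - t) *\<^sub>R u + t *\<^sub>R v"
      have "f p \<le> ereal ((1 - t) * a + t * b)" unfolding p_def
        using convex_efun_comb[OF cv _ _ _ t(2)] a real t(1) by simp
      hence fp: "f p + ereal (norm (p - x)^2 / (2*lam)) \<le> ereal ((1 - t) * a + t * b) + ereal (norm (p - x)^2 / (2*lam))"
        by (rule add_right_mono)
      have "ereal (a + norm (u - x)^2 / (2*lam)) = f u + ereal (norm (u - x)^2 / (2*lam))"
        using a by simp
      also have "\<dots> \<le> f p + ereal (norm (p - x)^2 / (2*lam))"
        using mn by blast
      also have "\<dots> \<le> ereal ((1 - t) * a + t * b) + ereal (norm (p - x)^2 / (2*lam))"
        by (rule fp)
      finally have "a + norm (u - x)^2 / (2*lam) \<le> (1 - t) * a + t * b + norm (p - x)^2 / (2*lam)"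
        by simp
      moreover have pe: "p - x = (u - x) + t *\<^sub>R (v - u)" unfolding p_def by (simp add: algebra_simps)
      have "norm (p - x)^2 = norm (u - x)^2 + 2 * t * inner (u - x) (v - u) + t^2 * N"
        unfolding N_def pe by (rule norm_add_scaled_sq)
      ultimately have X: "a + norm (u - x)^2 / (2*lam) \<le> (1 - t) * a + t * b + norm (p - x)^2 / (2*lam)"
        and np: "norm (p - x)^2 = norm (u - x)^2 + 2 * t * inner (u - x) (v - u) + t^2 * N" by blast+
      have "(1 - t) * a = a - t * a" "t * (a - b) = t * a - t * b" by (simp_all add: algebra_simps)
      moreover have "(norm (p - x)^2 - norm (u - x)^2) / (2*lam) = norm (p - x)^2 / (2*lam) - norm (u - x)^2 / (2*lam)"
        by (rule diff_divide_distrib)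
      ultimately have "t * (a - b) \<le> (norm (p - x)^2 - norm (u - x)^2) / (2*lam)" using X by linarith
      also have "\<dots> = (2 * t * inner (u - x) (v - u) + t^2 * N) / (2*lam)" using np by simp
      also have "\<dots> = t * ((inner (u - x) (v - u) + t / 2 * N) / lam)" using lam
        by (simp add: field_simps power2_eq_square)
      finally show ?thesis using t by (meson mult_left_le_imp_le)
    qed
    have "a - b \<le> inner (u - x) (v - u) / lam + e" if e: "e > 0" for e
    proof -
      define t where "t = min 1 (e * lam / (N + 1))"
      have t: "0 < t" "t \<le> 1" unfolding t_def using e lam N0 by auto
      have "t * N \<le> e * lam / (N + 1) * N" unfolding t_def using N0
        by (intro mult_right_mono) auto
      also have "\<dots> \<le> e * lam" using N0 e lam by (simp add: field_simps)
      finally have "t * N \<le> e * lam" .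
      have "e * lam \<le> e * (lam * 2)" using e lam by simp
      hence "t * N \<le> e * (lam * 2)" using \<open>t * N \<le> e * lam\<close> by linarith
      hence "t / 2 * N / lam \<le> e" using lam by (simp add: field_simps)
      moreover have "(inner (u - x) (v - u) + t / 2 * N) / lam = inner (u - x) (v - u) / lam + t / 2 * N / lam"
        by (rule add_divide_distrib)
      ultimately have "(inner (u - x) (v - u) + t / 2 * N) / lam \<le> inner (u - x) (v - u) / lam + e"
        by linarith
      thus ?thesis using step[OF t] by linarith
    qed
    hence "a - b \<le> inner (u - x) (v - u) / lam" by (rule field_le_epsilon)
    moreover have "inner (x - u) (v - u) = - inner (u - x) (v - u)" by (simp add: inner_diff_left)
    ultimately show ?thesis using real by (simp add: field_simps)
  qed
  thus ?thesis using a by blast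
qed

lemma fconj_at_subgrad:
  fixes g :: "'a::real_inner \<Rightarrow> ereal"
  assumes gw: "g w = ereal a" and sub: "\<forall>u. ereal (a + inner p (u - w)) \<le> g u"
  shows "fconj g p = ereal (inner p w - a)" and "\<forall>y. ereal (inner y w - a) \<le> fconj g y"
proof -
  show lo: "\<forall>y. ereal (inner y w - a) \<le> fconj g y"
  proof
    fix y
    have "ereal (inner y w) - g w \<le> fconj g y" unfolding fconj_def by (rule SUP_upper) simp
    thus "ereal (inner y w - a) \<le> fconj g y" using gw by simp
  qed
  have "fconj g p \<le> ereal (inner p w - a)" unfolding fconj_def
  proof (rule SUP_least)
    fix u :: 'a
    show "ereal (inner p u) - g u \<le> ereal (inner p w - a)"
    proof (cases "g u")
      case (real c)
      have "a + inner p (u - w) \<le> c" using sub[rule_format, of u] real by simp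
      thus ?thesis using real by (simp add: inner_diff_right)
    next
      case MInf thus ?thesis using sub[rule_format, of u] by simp
    qed simp
  qed
  thus "fconj g p = ereal (inner p w - a)" using lo by (meson antisym)
qed

lemma convex_grad_ineq:
  fixes h :: "'a::real_inner \<Rightarrow> real"
  assumes cv: "convex_on UNIV h" and gr: "\<And>u. (h has_derivative (\<lambda>v. inner (gh u) v)) (at u)"
  shows "h u + inner (gh u) (v - u) \<le> h v"
proof -
  define d where "d = v - u"
  define \<phi> where "\<phi> t = h (u + t *\<^sub>R d)" for t :: real
  have "convex_on UNIV \<phi>"
  proof (rule convex_onI)
    fix t a b :: real assume t: "0 < t" "t < 1"
    have "u + ((1 - t) *\<^sub>R a + t *\<^sub>R b) *\<^sub>R d = (1 - t) *\<^sub>R (u + a *\<^sub>R d) + t *\<^sub>R (u + b *\<^sub>R d)"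
      by (simp add: algebra_simps)
    thus "\<phi> ((1 - t) *\<^sub>R a + t *\<^sub>R b) \<le> (1 - t) * \<phi> a + t * \<phi> b"
      unfolding \<phi>_def using convex_onD[OF cv, of t "u + a *\<^sub>R d" "u + b *\<^sub>R d"] t
      by (simp del: scaleR_scaleR)
  qed simp
  moreover have "(\<phi> has_field_derivative (inner (gh u) d)) (at 0)"
  proof -
    have d1: "((\<lambda>t::real. u + t *\<^sub>R d) has_derivative (\<lambda>t. t *\<^sub>R d)) (at 0)"
      by (auto intro!: derivative_eq_intros)
    have "((\<lambda>t. h (u + t *\<^sub>R d)) has_derivative (\<lambda>t. inner (gh u) (t *\<^sub>R d))) (at 0)"
      using has_derivative_compose[OF d1, of h "\<lambda>v. inner (gh u) v"] gr[of u] by simp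
    thus ?thesis unfolding has_field_derivative_def \<phi>_def
      by (rule has_derivative_eq_rhs) (auto simp: fun_eq_iff)
  qed
  ultimately have "\<phi> 1 - \<phi> 0 \<ge> inner (gh u) d * (1 - 0)"
    by (intro convex_on_imp_above_tangent[where A = UNIV]) auto
  thus ?thesis unfolding \<phi>_def d_def by simp
qed

lemma saddle_real:
  fixes f :: "'a::real_inner \<Rightarrow> ereal" and g :: "'b::real_inner \<Rightarrow> ereal" and K :: "'a \<Rightarrow> 'b"
  assumes sp: "saddle_point f h K g xs ys" and nm: "\<forall>x. f x \<noteq> -\<infinity>"
    and x1: "f x1 = ereal a1" and Gnm: "\<And>y. fconj g y \<noteq> -\<infinity>"
    and y1: "fconj g y1 = ereal b1"
  shows "\<exists>fs Gs. f xs = ereal fs \<and> fconj g ys = ereal Gs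
     \<and> (\<forall>x a. f x = ereal a \<longrightarrow> fs + h xs + inner (K xs) ys \<le> a + h x + inner (K x) ys)
     \<and> (\<forall>y c. fconj g y = ereal c \<longrightarrow> Gs - inner (K xs) ys \<le> c - inner (K xs) y)"
proof -
  have L1: "\<And>y. lagr f h K g xs y \<le> lagr f h K g xs ys" and L2: "\<And>x. lagr f h K g xs ys \<le> lagr f h K g x ys"
    using sp unfolding saddle_point_def by auto
  obtain Gs where Gs: "fconj g ys = ereal Gs"
  proof (cases "fconj g ys")
    case PInf
    have "lagr f h K g xs ys \<le> lagr f h K g x1 ys" by (rule L2)
    also have "\<dots> = -\<infinity>" unfolding lagr_def using x1 PInf by simp
    finally have "lagr f h K g xs ys = -\<infinity>" by simp
    moreover have "lagr f h K g xs y1 \<le> lagr f h K g xs ys" by (rule L1)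
    moreover have "lagr f h K g xs y1 \<noteq> -\<infinity>" unfolding lagr_def using y1 nm[rule_format, of xs]
      by (cases "f xs") auto
    ultimately show ?thesis by simp
  qed (use Gnm in auto)
  obtain fs where fs: "f xs = ereal fs"
  proof (cases "f xs")
    case PInf
    have "lagr f h K g xs ys = \<infinity>" unfolding lagr_def using PInf Gs by simp
    moreover have "lagr f h K g xs ys \<le> lagr f h K g x1 ys" by (rule L2)
    moreover have "lagr f h K g x1 ys = ereal (a1 + (h x1 + inner (K x1) ys) - Gs)"
      unfolding lagr_def using x1 Gs by simp
    ultimately show ?thesis by simp
  qed (use nm in auto)
  have A: "fs + h xs + inner (K xs) ys \<le> a + h x + inner (K x) ys" if "f x = ereal a" for x a
    using L2[of x] that fs Gs unfolding lagr_def by simp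
  have B: "Gs - inner (K xs) ys \<le> c - inner (K xs) y" if "fconj g y = ereal c" for y c
    using L1[of y] that fs Gs unfolding lagr_def by simp
  show ?thesis using A B fs Gs by blast
qed

lemma saddle_from_subgrad:
  fixes f :: "'a::real_inner \<Rightarrow> ereal" and g :: "'b::real_inner \<Rightarrow> ereal" and K :: "'a \<Rightarrow> 'b"
  assumes lin: "linear K" and fx: "f xh = ereal a" and Gy: "fconj g yh = ereal c"
    and sf: "\<forall>u. ereal (a - inner yh (K u - K xh) - inner p (u - xh)) \<le> f u"
    and sg: "\<forall>y. ereal (c + inner (K xh) (y - yh)) \<le> fconj g y"
    and hg: "\<forall>u. h xh + inner p (u - xh) \<le> h u"
  shows "saddle_point f h K g xh yh"
  unfolding saddle_point_def
proof (intro allI conjI)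
  fix x y
  show "lagr f h K g xh y \<le> lagr f h K g xh yh"
  proof (cases "fconj g y")
    case (real c')
    have "c + inner (K xh) (y - yh) \<le> c'" using sg[rule_format, of y] real by simp
    thus ?thesis unfolding lagr_def using fx Gy real by (simp add: inner_diff_right)
  next
    case PInf thus ?thesis unfolding lagr_def using fx Gy by simp
  next
    case MInf thus ?thesis using sg[rule_format, of y] by simp
  qed
  show "lagr f h K g xh yh \<le> lagr f h K g x yh"
  proof (cases "f x")
    case (real b)
    have "a - inner yh (K x - K xh) - inner p (x - xh) \<le> b" using sf[rule_format, of x] real by simp
    moreover have "h xh + inner p (x - xh) \<le> h x" using hg by blast
    ultimately have "a + h xh + inner (K xh) yh \<le> b + h x + inner (K x) yh"
      by (simp add: inner_diff_right inner_commute)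
    thus ?thesis unfolding lagr_def using fx Gy real by simp
  next
    case PInf thus ?thesis unfolding lagr_def using fx Gy by simp
  next
    case MInf thus ?thesis using sf[rule_format, of x] by simp
  qed
qed

lemma polar2:
  fixes a b c :: "'a::real_inner"
  shows "2 * inner (a - c) (b - c) = norm (a - c)^2 + norm (b - c)^2 - norm (a - b)^2"
  unfolding power2_norm_eq_inner
  by (simp add: inner_diff_left inner_diff_right inner_commute algebra_simps)

lemma norm_lincomb_sq:
  fixes a c :: "'a::real_inner"
  shows "norm (p *\<^sub>R a + q *\<^sub>R c)^2 = p^2 * inner a a + 2 * p * q * inner a c + q^2 * inner c c"
  unfolding power2_norm_eq_inner
  by (simp add: inner_add_left inner_add_right inner_commute power2_eq_square algebra_simps)

lemma golden_real:
  fixes A C X \<psi> :: real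
  assumes "\<psi> > 1"
  shows "A = (\<psi>/(\<psi>-1)) * (((\<psi>-1)/\<psi>)^2 * A + 2 * ((\<psi>-1)/\<psi>) * (1/\<psi>) * X + (1/\<psi>)^2 * C)
           - (1/(\<psi>-1)) * C + (1/\<psi>) * (A - 2 * X + C)"
proof -
  define p where "p = (\<psi>-1)/\<psi>"
  define q where "q = 1/\<psi>"
  have nz: "\<psi> \<noteq> 0" "\<psi> - 1 \<noteq> 0" using assms by auto
  have f1: "\<psi>/(\<psi>-1) * p^2 = p" unfolding p_def using nz by (simp add: field_simps power2_eq_square)
  have f2: "\<psi>/(\<psi>-1) * (2*p*q) = 2*q" unfolding p_def q_def using nz by (simp add: field_simps)
  have f3: "\<psi>/(\<psi>-1) * q^2 = 1/(\<psi>*(\<psi>-1))" unfolding q_def using nz by (simp add: field_simps power2_eq_square)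
  have "1/(\<psi>*(\<psi>-1)) = 1/(\<psi>-1) - 1/\<psi>" using nz by (simp add: field_simps)
  hence f4: "1/(\<psi>*(\<psi>-1)) - 1/(\<psi>-1) + q = 0" unfolding q_def by simp
  have f5: "p + q = 1" unfolding p_def q_def using nz by (simp add: field_simps)
  have "(\<psi>/(\<psi>-1)) * (p^2 * A + 2 * p * q * X + q^2 * C)
      = (\<psi>/(\<psi>-1)*p^2)*A + (\<psi>/(\<psi>-1)*(2*p*q))*X + (\<psi>/(\<psi>-1)*q^2)*C" by (simp add: algebra_simps)
  also have "\<dots> = p*A + 2*q*X + 1/(\<psi>*(\<psi>-1))*C" by (simp only: f1 f2 f3)
  finally have e: "(\<psi>/(\<psi>-1)) * (p^2 * A + 2 * p * q * X + q^2 * C) = p*A + 2*q*X + 1/(\<psi>*(\<psi>-1))*C" .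
  have "(\<psi>/(\<psi>-1)) * (p^2 * A + 2 * p * q * X + q^2 * C) - (1/(\<psi>-1)) * C + q * (A - 2 * X + C)
     = (p + q) * A + (1/(\<psi>*(\<psi>-1)) - 1/(\<psi>-1) + q) * C" unfolding e by (simp add: algebra_simps)
  also have "\<dots> = A" by (simp only: f4 f5)
  finally show ?thesis unfolding p_def q_def by simp
qed

lemma golden_comb:
  fixes a c :: "'a::real_inner"
  assumes "\<psi> > 1"
  shows "norm a^2 = (\<psi>/(\<psi>-1)) * norm (((\<psi>-1)/\<psi>) *\<^sub>R a + (1/\<psi>) *\<^sub>R c)^2
           - (1/(\<psi>-1)) * norm c^2 + (1/\<psi>) * norm (a - c)^2"
proof -
  have e1: "norm (((\<psi>-1)/\<psi>) *\<^sub>R a + (1/\<psi>) *\<^sub>R c)^2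
     = ((\<psi>-1)/\<psi>)^2 * inner a a + 2 * ((\<psi>-1)/\<psi>) * (1/\<psi>) * inner a c + (1/\<psi>)^2 * inner c c"
    by (rule norm_lincomb_sq)
  have e2: "norm (a - c)^2 = inner a a - 2 * inner a c + inner c c"
    unfolding power2_norm_eq_inner by (simp add: inner_diff_left inner_diff_right inner_commute)
  have e3: "norm a^2 = inner a a" "norm c^2 = inner c c" by (simp_all add: power2_norm_eq_inner)
  show ?thesis unfolding e1 e2 e3 by (rule golden_real[OF assms])
qed

lemma sum_step:
  fixes xa xb xc za zb xs :: "'a::real_inner" and ya yb ys :: "'b::real_inner"
    and K :: "'a \<Rightarrow> 'b" and Kt :: "'b \<Rightarrow> 'a" and gh :: "'a \<Rightarrow> 'a"
  assumes adj: "\<And>u y. inner (Kt y) u = inner y (K u)" and lin: "linear K"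
    and A: "fs - Fc \<ge> inner (zb - xc) (xs - xc) / t1 - inner (Kt yb + gh xb) (xs - xc)"
    and B: "Fc - Fb \<ge> inner (za - xb) (xc - xb) / t0 - inner (Kt ya + gh xa) (xc - xb)"
    and C: "Gss - Gb \<ge> inner (K xb - s *\<^sub>R (yb - ya)) (ys - yb)"
    and S1: "Fb + h xb + inner (K xb) ys \<ge> fs + h xs + inner (K xs) ys"
    and S2: "Gb - inner (K xs) yb \<ge> Gss - inner (K xs) ys"
    and H: "h xs \<ge> h xb + inner (gh xb) (xs - xb)"
  shows "inner (zb - xc) (xs - xc) / t1 + inner (za - xb) (xc - xb) / t0
     + s * inner (ya - yb) (ys - yb) + inner (yb - ya) (K xc - K xb)
     + inner (gh xb - gh xa) (xc - xb) \<le> 0"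
proof -
  have e1: "inner (Kt yb + gh xb) (xs - xc) = inner yb (K xs) - inner yb (K xc) + inner (gh xb) (xs - xc)"
    by (simp add: inner_add_left adj inner_diff_right)
  have e2: "inner (Kt ya + gh xa) (xc - xb) = inner ya (K xc) - inner ya (K xb) + inner (gh xa) (xc - xb)"
    by (simp add: inner_add_left adj inner_diff_right)
  have e3: "inner (K xb - s *\<^sub>R (yb - ya)) (ys - yb) = inner (K xb) ys - inner yb (K xb) - s * inner (yb - ya) (ys - yb)"
    by (simp add: inner_diff_left inner_diff_right inner_commute)
  have e4: "inner (yb - ya) (K xc - K xb) = inner yb (K xc) - inner yb (K xb) - inner ya (K xc) + inner ya (K xb)"
    by (simp add: inner_diff_left inner_diff_right)
  have e5: "inner (gh xb) (xs - xc) = inner (gh xb) (xs - xb) - inner (gh xb) (xc - xb)"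
    by (simp add: inner_diff_right)
  have e6: "inner (gh xb - gh xa) (xc - xb) = inner (gh xb) (xc - xb) - inner (gh xa) (xc - xb)"
    by (simp add: inner_diff_left)
  have e7: "s * inner (ya - yb) (ys - yb) = - (s * inner (yb - ya) (ys - yb))"
    by (simp add: inner_diff_left algebra_simps)
  have e8: "inner (K xs) yb = inner yb (K xs)" by (simp add: inner_commute)
  show ?thesis using A B C S1 S2 H e1 e2 e3 e4 e5 e6 e7 e8 by linarith
qed

lemma final_real:
  fixes P1 P2 P3 Q1 Q2 r b a p \<psi> k \<mu>' Nzbxc Nxcxs Nzbxs Nzbxb Dx Dy Nybys Nyays Nzcxs Da :: real
  assumes M: "P1 + r*P2 + b*P3 + Q1 + Q2 \<le> 0"
    and P1: "P1 = Nzbxc + Nxcxs - Nzbxs" and P2: "P2 = \<psi>*(Nzbxb + Dx - Nzbxc)"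
    and P3: "P3 = Dy + Nybys - Nyays"
    and G: "Nxcxs = (1+a)*Nzcxs - a*Nzbxs + p*Nzbxc"
    and Y1: "-(k*Dx + k*b*Dy) \<le> Q1" and Y2: "-(\<mu>'*Da + \<mu>'*Dx) \<le> Q2"
    and Dr: "0 \<le> Nzbxc + p*Nzbxc - r*\<psi>*Nzbxc"
  shows "(1+a)*Nzcxs + b*Nybys + \<mu>'*Dx + (r*\<psi> - k - 2*\<mu>')*Dx + (b - k*b)*Dy + r*\<psi>*Nzbxb
         \<le> (1+a)*Nzbxs + b*Nyays + \<mu>'*Da"
proof -
  have "((1+a)*Nzcxs + b*Nybys + \<mu>'*Dx + (r*\<psi> - k - 2*\<mu>')*Dx + (b - k*b)*Dy + r*\<psi>*Nzbxb)
         - ((1+a)*Nzbxs + b*Nyays + \<mu>'*Da)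
     = (P1 + r*P2 + b*P3 + Q1 + Q2) - (Q1 + (k*Dx + k*b*Dy)) - (Q2 + (\<mu>'*Da + \<mu>'*Dx))
       - (Nzbxc + p*Nzbxc - r*\<psi>*Nzbxc)"
    unfolding P1 P2 P3 G by (simp add: algebra_simps)
  thus ?thesis using M Y1 Y2 Dr by linarith
qed

lemma young_K:
  fixes t1 t2 \<beta> \<mu> nx ny nk I :: real
  assumes SK: "t2 * nk \<le> \<mu> / sqrt \<beta> * nx" and pos: "t1 > 0" "t2 > 0" "\<beta> > 0" "\<mu> \<ge> 0"
    and nn: "nx \<ge> 0" "ny \<ge> 0" "nk \<ge> 0" and CS: "\<bar>I\<bar> \<le> ny * nk"
  shows "-(t1/t2*\<mu>*nx^2 + t1/t2*\<mu>*(1/\<beta>)*ny^2) \<le> 2*t1*I"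
proof -
  define c where "c = t1/t2"
  have c0: "c \<ge> 0" using pos unfolding c_def by simp
  have "t1 * nk = c * (t2 * nk)" unfolding c_def using pos by simp
  also have "\<dots> \<le> c * (\<mu> / sqrt \<beta> * nx)" using SK c0 by (rule mult_left_mono)
  finally have tk: "t1 * nk \<le> c * (\<mu> / sqrt \<beta> * nx)" .
  have sq: "(ny / sqrt \<beta>)^2 = ny^2 / \<beta>" using pos by (simp add: power_divide)
  have "0 \<le> (nx - ny / sqrt \<beta>)^2" by simp
  hence amgm: "2 * nx * (ny / sqrt \<beta>) \<le> nx^2 + ny^2 / \<beta>"
    unfolding sq[symmetric] by (simp add: power2_diff)
  have "2*t1*\<bar>I\<bar> \<le> 2*t1*(ny*nk)" using CS pos by simp
  also have "\<dots> = 2*ny*(t1*nk)" by (simp add: algebra_simps)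
  also have "\<dots> \<le> 2*ny*(c * (\<mu> / sqrt \<beta> * nx))" using tk nn by (intro mult_left_mono) auto
  also have "\<dots> = (c*\<mu>) * (2 * nx * (ny / sqrt \<beta>))" by (simp add: algebra_simps)
  also have "\<dots> \<le> (c*\<mu>) * (nx^2 + ny^2 / \<beta>)" using amgm c0 pos by (intro mult_left_mono) auto
  also have "\<dots> = c*\<mu>*nx^2 + c*\<mu>*(1/\<beta>)*ny^2" by (simp add: algebra_simps)
  finally have "2*t1*\<bar>I\<bar> \<le> c*\<mu>*nx^2 + c*\<mu>*(1/\<beta>)*ny^2" .
  moreover have "2*t1*(-\<bar>I\<bar>) \<le> 2*t1*I" using pos by (intro mult_left_mono) auto
  ultimately show ?thesis unfolding c_def by linarith
qed

lemma young_G: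
  fixes t1 \<mu>' na nx ng I :: real
  assumes SG: "t1 * ng \<le> \<mu>' * na" and pos: "t1 > 0" "\<mu>' \<ge> 0"
    and nn: "nx \<ge> 0" "na \<ge> 0" "ng \<ge> 0" and CS: "\<bar>I\<bar> \<le> ng * nx"
  shows "-(\<mu>'*na^2 + \<mu>'*nx^2) \<le> 2*t1*I"
proof -
  have "0 \<le> (na - nx)^2" by simp
  hence amgm: "2 * na * nx \<le> na^2 + nx^2" by (simp add: power2_diff)
  have "2*t1*\<bar>I\<bar> \<le> 2*t1*(ng*nx)" using CS pos by simp
  also have "\<dots> = 2*nx*(t1*ng)" by (simp add: algebra_simps)
  also have "\<dots> \<le> 2*nx*(\<mu>'*na)" using SG nn by (intro mult_left_mono) auto
  also have "\<dots> = \<mu>' * (2*na*nx)" by (simp add: algebra_simps)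
  also have "\<dots> \<le> \<mu>' * (na^2 + nx^2)" using amgm pos by (intro mult_left_mono) auto
  finally have "2*t1*\<bar>I\<bar> \<le> \<mu>'*na^2 + \<mu>'*nx^2" by (simp add: algebra_simps)
  moreover have "2*t1*(-\<bar>I\<bar>) \<le> 2*t1*I" using pos by (intro mult_left_mono) auto
  ultimately show ?thesis by linarith
qed

lemma energy_step:
  fixes xa xb xc za zb zc xs :: "'a::real_inner" and ya yb ys :: "'b::real_inner"
    and K :: "'a \<Rightarrow> 'b" and gh :: "'a \<Rightarrow> 'a"
  assumes I0: "inner (zb - xc) (xs - xc) / t1 + inner (za - xb) (xc - xb) / t0
     + (1/(\<beta>*t1)) * inner (ya - yb) (ys - yb) + inner (yb - ya) (K xc - K xb)
     + inner (gh xb - gh xa) (xc - xb) \<le> 0"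
    and zb: "zb = ((\<psi>-1)/\<psi>) *\<^sub>R xb + (1/\<psi>) *\<^sub>R za"
    and zc: "zc = ((\<psi>-1)/\<psi>) *\<^sub>R xc + (1/\<psi>) *\<^sub>R zb"
    and SK: "t2 * norm (K xc - K xb) \<le> \<mu> / sqrt \<beta> * norm (xc - xb)"
    and SG: "t1 * norm (gh xb - gh xa) \<le> \<mu>' * norm (xb - xa)"
    and pos: "t0 > 0" "t1 > 0" "t2 > 0" "\<beta> > 0" "\<psi> > 1" "\<psi>^2 \<le> \<psi> + 1" "t1 \<le> t0" "\<mu> \<ge> 0" "\<mu>' \<ge> 0"
  shows "(\<psi>/(\<psi>-1)) * norm (zc - xs)^2 + (1/\<beta>) * norm (yb - ys)^2 + \<mu>' * norm (xc - xb)^2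
     + (t1/t0*\<psi> - t1/t2*\<mu> - 2*\<mu>') * norm (xc - xb)^2 + ((1/\<beta>) - t1/t2*\<mu>*(1/\<beta>)) * norm (yb - ya)^2
     + t1/t0*\<psi>*norm (zb - xb)^2
     \<le> (\<psi>/(\<psi>-1)) * norm (zb - xs)^2 + (1/\<beta>) * norm (ya - ys)^2 + \<mu>' * norm (xb - xa)^2"
proof -
  define r where "r = t1/t0"
  define b where "b = 1/\<beta>"
  define a where "a = 1/(\<psi>-1)"
  define p where "p = 1/\<psi>"
  define k where "k = t1/t2*\<mu>"
  have \<psi>a: "\<psi>/(\<psi>-1) = 1 + a" unfolding a_def using pos by (simp add: field_simps)
  define X1 where "X1 = inner (zb - xc) (xs - xc)"
  define X2 where "X2 = inner (za - xb) (xc - xb)"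
  define W where "W = inner (ya - yb) (ys - yb)"
  define R1 where "R1 = inner (yb - ya) (K xc - K xb)"
  define R2 where "R2 = inner (gh xb - gh xa) (xc - xb)"
  have "2*t1*(X1/t1 + X2/t0 + (1/(\<beta>*t1)) * W + R1 + R2) = 2*X1 + r*(2*X2) + b*(2*W) + 2*t1*R1 + 2*t1*R2"
    unfolding r_def b_def using pos by (simp add: field_simps)
  moreover have "2*t1*(X1/t1 + X2/t0 + (1/(\<beta>*t1)) * W + R1 + R2) \<le> 0"
    using I0 pos unfolding X1_def X2_def W_def R1_def R2_def by (simp add: mult_nonneg_nonpos)
  ultimately have M: "2*X1 + r*(2*X2) + b*(2*W) + 2*t1*R1 + 2*t1*R2 \<le> 0" by simp
  have P1: "2*X1 = norm (zb - xc)^2 + norm (xc - xs)^2 - norm (zb - xs)^2"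
    unfolding X1_def using polar2[of zb xc xs] by (simp add: norm_minus_commute)
  have "\<psi> *\<^sub>R zb = (\<psi>-1) *\<^sub>R xb + za" unfolding zb using pos by (simp add: scaleR_add_right)
  hence "za - xb = \<psi> *\<^sub>R (zb - xb)" by (simp add: algebra_simps)
  hence "X2 = \<psi> * inner (zb - xb) (xc - xb)" unfolding X2_def by simp
  hence P2: "2*X2 = \<psi>*(norm (zb - xb)^2 + norm (xc - xb)^2 - norm (zb - xc)^2)"
    using polar2[of zb xb xc] by simp
  have P3: "2*W = norm (yb - ya)^2 + norm (yb - ys)^2 - norm (ya - ys)^2"
    unfolding W_def using polar2[of ya yb ys] by (simp add: norm_minus_commute)
  have s1: "(\<psi>-1)/\<psi> + 1/\<psi> = 1" using pos by (simp add: field_simps)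
  have "xs = ((\<psi>-1)/\<psi>) *\<^sub>R xs + (1/\<psi>) *\<^sub>R xs" by (simp add: scaleR_left_distrib[symmetric] s1)
  hence zce: "((\<psi>-1)/\<psi>) *\<^sub>R (xc - xs) + (1/\<psi>) *\<^sub>R (zb - xs) = zc - xs" unfolding zc
    by (simp add: algebra_simps)
  have G: "norm (xc - xs)^2 = (1+a) * norm (zc - xs)^2 - a * norm (zb - xs)^2 + p * norm (zb - xc)^2"
    using golden_comb[OF pos(5), of "xc - xs" "zb - xs"] unfolding zce \<psi>a a_def p_def
    by (simp add: norm_minus_commute)
  have Y1: "-(k*norm (xc - xb)^2 + k*b*norm (yb - ya)^2) \<le> 2*t1*R1"
    unfolding k_def b_def R1_def
    by (rule young_K[OF SK pos(2,3,4,8)]) (auto simp: Cauchy_Schwarz_ineq2)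
  have Y2: "-(\<mu>'*norm (xb - xa)^2 + \<mu>'*norm (xc - xb)^2) \<le> 2*t1*R2"
    unfolding R2_def
    by (rule young_G[OF SG pos(2,9)]) (auto simp: Cauchy_Schwarz_ineq2)
  have "\<psi> \<le> 1 + p" unfolding p_def using pos by (simp add: field_simps power2_eq_square)
  moreover have "r * \<psi> \<le> \<psi>" unfolding r_def using pos by (simp add: field_simps)
  ultimately have "0 \<le> (1 + p - r*\<psi>) * norm (zb - xc)^2" by simp
  hence Dr: "0 \<le> norm (zb - xc)^2 + p*norm (zb - xc)^2 - r*\<psi>*norm (zb - xc)^2" by (simp add: algebra_simps)
  have "(1+a)*norm (zc - xs)^2 + b*norm (yb - ys)^2 + \<mu>'*norm (xc - xb)^2
     + (r*\<psi> - k - 2*\<mu>')*norm (xc - xb)^2 + (b - k*b)*norm (yb - ya)^2 + r*\<psi>*norm (zb - xb)^2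
     \<le> (1+a)*norm (zb - xs)^2 + b*norm (ya - ys)^2 + \<mu>'*norm (xb - xa)^2"
    by (rule final_real[OF M P1 P2 P3 G Y1 Y2 Dr])
  thus ?thesis unfolding \<psi>a[symmetric] r_def b_def k_def by simp
qed

lemma fejer_conv:
  fixes E d :: "nat \<Rightarrow> real"
  assumes ev: "eventually (\<lambda>m. E (Suc m) + d m \<le> E m) sequentially"
    and d0: "\<And>m. 0 \<le> d m" and E0: "\<And>m. 0 \<le> E m"
  shows "convergent E" "d \<longlonglongrightarrow> 0"
proof -
  obtain N where N: "\<And>m. m \<ge> N \<Longrightarrow> E (Suc m) + d m \<le> E m"
    using ev unfolding eventually_sequentially by auto
  have "E (Suc k + N) \<le> E (k + N)" for k using N[of "k + N"] d0[of "k + N"] by simp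
  hence dec: "decseq (\<lambda>k. E (k + N))" unfolding decseq_Suc_iff by simp
  obtain L where L: "(\<lambda>k. E (k + N)) \<longlonglongrightarrow> L" using decseq_convergent[OF dec, of 0] E0 by blast
  hence EL: "E \<longlonglongrightarrow> L" by (rule LIMSEQ_offset)
  thus "convergent E" by (auto simp: convergent_def)
  have lim: "(\<lambda>m. E m - E (Suc m)) \<longlonglongrightarrow> L - L" by (intro tendsto_intros EL LIMSEQ_Suc)
  have e1: "eventually (\<lambda>m. (\<lambda>_. 0::real) m \<le> d m) sequentially" using d0 by simp
  have e2: "eventually (\<lambda>m. d m \<le> E m - E (Suc m)) sequentially" using ev by (auto elim: eventually_mono)
  have lim0: "(\<lambda>m. E m - E (Suc m)) \<longlonglongrightarrow> 0" using lim by simp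
  show "d \<longlonglongrightarrow> 0" by (rule tendsto_sandwich[OF e1 e2 tendsto_const lim0])
qed

lemma sq_to_zero:
  fixes v :: "nat \<Rightarrow> 'a::real_normed_vector"
  assumes "(\<lambda>m. norm (v m)^2) \<longlonglongrightarrow> 0"
  shows "v \<longlonglongrightarrow> 0"
proof -
  have "(\<lambda>m. sqrt (norm (v m)^2)) \<longlonglongrightarrow> sqrt 0" by (intro tendsto_intros assms)
  hence "(\<lambda>m. norm (v m)) \<longlonglongrightarrow> 0" by simp
  thus ?thesis by (simp add: tendsto_norm_zero_iff)
qed

lemma fconj_lsc_seq:
  fixes g :: "'a::real_inner \<Rightarrow> ereal"
  assumes nm: "\<forall>x. g x \<noteq> -\<infinity>" and Y: "Y \<longlonglongrightarrow> yh"
    and ev: "eventually (\<lambda>k. fconj g (Y k) \<le> ereal (B k)) sequentially" and B: "B \<longlonglongrightarrow> b"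
  shows "fconj g yh \<le> ereal b"
  unfolding fconj_def
proof (rule SUP_least)
  fix u
  show "ereal (inner yh u) - g u \<le> ereal b"
  proof (cases "g u")
    case (real c)
    have ev2: "eventually (\<lambda>k. inner (Y k) u - c \<le> B k) sequentially"
      using ev
    proof eventually_elim
      case (elim k)
      have "ereal (inner (Y k) u) - g u \<le> fconj g (Y k)" unfolding fconj_def by (rule SUP_upper) simp
      hence "ereal (inner (Y k) u - c) \<le> fconj g (Y k)" using real by simp
      hence "ereal (inner (Y k) u - c) \<le> ereal (B k)" using elim by (rule order_trans)
      thus ?case by simp
    qed
    have "(\<lambda>k. inner (Y k) u - c) \<longlonglongrightarrow> inner yh u - c" by (intro tendsto_intros Y)
    hence "inner yh u - c \<le> b" using tendsto_le[OF trivial_limit_sequentially B _ ev2] by blast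
    thus ?thesis using real by simp
  qed (use nm in auto)
qed

lemma lip_tendsto:
  fixes gh :: "'a::real_normed_vector \<Rightarrow> 'b::real_normed_vector"
  assumes lip: "\<And>u v. norm (gh u - gh v) \<le> L * norm (u - v)" and X: "X \<longlonglongrightarrow> a"
  shows "(\<lambda>k. gh (X k)) \<longlonglongrightarrow> gh a"
proof -
  have "(\<lambda>k. X k - a) \<longlonglongrightarrow> 0" using X by (rule LIM_zero)
  hence "(\<lambda>k. norm (X k - a)) \<longlonglongrightarrow> 0" by (simp add: tendsto_norm_zero_iff)
  hence "(\<lambda>k. L * norm (X k - a)) \<longlonglongrightarrow> L * 0" by (intro tendsto_intros)
  hence l0: "(\<lambda>k. L * norm (X k - a)) \<longlonglongrightarrow> 0" by simp
  have ev: "\<forall>k. norm (gh (X k) - gh a) \<le> L * norm (X k - a)" using lip by blast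
  have "(\<lambda>k. gh (X k) - gh a) \<longlonglongrightarrow> 0"
    by (rule Lim_null_comparison[OF always_eventually[OF ev] l0])
  thus ?thesis by (rule LIM_zero_cancel)
qed

lemma prox_inner_conv:
  fixes z a b x' d :: "'a::real_inner"
  assumes "lam > 0"
  shows "inner (z - lam *\<^sub>R a - lam *\<^sub>R b - x') d / lam = inner (z - x') d / lam - inner (a + b) d"
proof -
  have "z - lam *\<^sub>R a - lam *\<^sub>R b - x' = (z - x') - lam *\<^sub>R (a + b)" by (simp add: algebra_simps)
  hence "inner (z - lam *\<^sub>R a - lam *\<^sub>R b - x') d = inner (z - x') d - lam * inner (a + b) d"
    by (simp add: inner_diff_left inner_add_left algebra_simps)
  thus ?thesis using assms by (simp add: diff_divide_distrib)
qed

lemma norm_sq_le_max: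
  fixes v :: "'a::real_normed_vector"
  shows "norm v ^2 \<le> C \<Longrightarrow> norm v \<le> max 1 C"
  by (smt (verit, ccfv_SIG) norm_ge_zero power2_eq_square mult_le_cancel_left1)

theorem theorem3p1:
  fixes f :: "'a::euclidean_space \<Rightarrow> ereal" and g :: "'b::euclidean_space \<Rightarrow> ereal"
    and K :: "'a \<Rightarrow> 'b" and h :: "'a \<Rightarrow> real" and gh :: "'a \<Rightarrow> 'a" and L :: real
    and x z :: "nat \<Rightarrow> 'a" and y w :: "nat \<Rightarrow> 'b" and tau :: "nat \<Rightarrow> real"
    and \<beta> \<psi> \<mu> \<mu>' :: real
  assumes f_pcl: "proper_fun f" "convex_efun f" "lsc_efun f"
    and g_pcl: "proper_fun g" "convex_efun g" "lsc_efun g"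
    and K_lin: "linear K"
    and h_conv: "convex_on UNIV h"
    and h_grad: "\<And>u. (h has_derivative (\<lambda>v. gh u \<bullet> v)) (at u)"
    and gh_lip: "\<And>u v. norm (gh u - gh v) \<le> L * norm (u - v)"
    and A1_sol: "\<exists>xs ys. saddle_point f h K g xs ys"
    and A1_ri: "0 \<in> rel_interior {K u - v | u v. u \<in> edom f \<and> v \<in> edom g}"
    and beta: "\<beta> > 0"
    and psi: "1 < \<psi>" "\<psi> \<le> golden"
    and mu: "0 < 2 * \<mu>'" "2 * \<mu>' < \<mu>" "\<mu> < \<psi> / 2"
    and tau0: "tau 0 > 0"
    and z0: "z 0 = x 0"
    and z_step: "\<And>n. z (Suc n) = ((\<psi> - 1) / \<psi>) *\<^sub>R x n + (1 / \<psi>) *\<^sub>R z n"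
    and x_step: "\<And>n. x (Suc n) = prox (tau n) f
                   (z (Suc n) - tau n *\<^sub>R adjoint K (y n) - tau n *\<^sub>R gh (x n))"
    and tau_step: "\<And>n. tau (Suc n) = min (tau n)
                   (min (if K (x (Suc n)) - K (x n) = 0 then tau n
                         else \<mu> * norm (x (Suc n) - x n) / (sqrt \<beta> * norm (K (x (Suc n)) - K (x n))))
                        (if gh (x (Suc n)) - gh (x n) = 0 then tau n
                         else \<mu>' * norm (x (Suc n) - x n) / norm (gh (x (Suc n)) - gh (x n))))"
    and w_step: "\<And>n. w (Suc n) = prox (1 / (\<beta> * tau (Suc n))) g
                   ((1 / (\<beta> * tau (Suc n))) *\<^sub>R y n + K (x (Suc n)))"
    and y_step: "\<And>n. y (Suc n) = y n + (\<beta> * tau (Suc n)) *\<^sub>R (K (x (Suc n)) - w (Suc n))"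
  shows "\<exists>xh yh. saddle_point f h K g xh yh \<and> ((\<lambda>n. (x n, y n)) \<longlonglongrightarrow> (xh, yh))"
proof -
  have nmf: "\<forall>x. f x \<noteq> -\<infinity>" using f_pcl(1) unfolding proper_fun_def by auto
  have nmg: "\<forall>x. g x \<noteq> -\<infinity>" using g_pcl(1) unfolding proper_fun_def by auto
  have s5: "sqrt 5 * sqrt 5 = (5::real)" by simp
  have psi2: "\<psi>^2 \<le> \<psi> + 1"
  proof -
    have a: "\<psi> - (1 + sqrt 5)/2 \<le> 0" using psi(2) unfolding golden_def by simp
    have "sqrt 5 > 1" by simp
    hence b: "\<psi> - (1 - sqrt 5)/2 \<ge> 0" using psi(1) by (simp add: field_simps; linarith)
    have "(\<psi> - (1 + sqrt 5)/2) * (\<psi> - (1 - sqrt 5)/2) \<le> 0" using a b by (rule mult_nonpos_nonneg)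
    moreover have "(\<psi> - (1 + sqrt 5)/2) * (\<psi> - (1 - sqrt 5)/2) = \<psi>*\<psi> - \<psi> + (1 - sqrt 5 * sqrt 5)/4"
      by (simp add: field_simps)
    hence "(\<psi> - (1 + sqrt 5)/2) * (\<psi> - (1 - sqrt 5)/2) = \<psi>^2 - \<psi> - 1"
      using s5 by (simp add: power2_eq_square)
    ultimately show ?thesis by simp
  qed
  have "sqrt 5 < sqrt ((3::real)^2)" by (subst real_sqrt_less_iff) simp
  hence "sqrt 5 < 3" by simp
  hence "\<psi> < 2" using psi(2) unfolding golden_def by simp
  hence mu1: "\<mu> < 1" using mu by simp
  have mupos: "\<mu> > 0" "\<mu>' > 0" using mu by auto
  obtain B where B: "B > 0" "\<And>u. norm (K u) \<le> B * norm u" using linear_bounded_pos[OF K_lin] by blast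
  define Lp where "Lp = max L 1"
  have Lp: "Lp > 0" "L \<le> Lp" unfolding Lp_def by auto
  define tmin where "tmin = min (tau 0) (min (\<mu> / (sqrt \<beta> * B)) (\<mu>' / Lp))"
  have tmin_pos: "tmin > 0" unfolding tmin_def using tau0 mupos B beta Lp by auto
  have tau_dec: "\<And>n. tau (Suc n) \<le> tau n" using tau_step by simp
  have tau_lb: "tmin \<le> tau n" for n
  proof (induction n)
    case 0 show ?case unfolding tmin_def by simp
  next
    case (Suc n)
    define d where "d = x (Suc n) - x n"
    have Kd: "K (x (Suc n)) - K (x n) = K d" unfolding d_def using linear_diff[OF K_lin] by simp
    have t1: "tmin \<le> (if K (x (Suc n)) - K (x n) = 0 then tau n
                         else \<mu> * norm (x (Suc n) - x n) / (sqrt \<beta> * norm (K (x (Suc n)) - K (x n))))"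
    proof (cases "K (x (Suc n)) - K (x n) = 0")
      case True thus ?thesis using Suc by simp
    next
      case False
      have nK: "norm (K d) > 0" using False Kd by simp
      have "d \<noteq> 0"
      proof
        assume "d = 0"
        hence "K d = 0" using linear_0[OF K_lin] by simp
        thus False using nK by simp
      qed
      hence nd: "norm d > 0" by simp
      have "\<mu> / (sqrt \<beta> * B) = \<mu> * norm d / (sqrt \<beta> * (B * norm d))" using nd by simp
      also have "\<dots> \<le> \<mu> * norm d / (sqrt \<beta> * norm (K d))"
        using B(2)[of d] nK nd mupos beta B(1)
        by (intro divide_left_mono mult_left_mono mult_pos_pos) auto
      finally have "tmin \<le> \<mu> * norm d / (sqrt \<beta> * norm (K d))" unfolding tmin_def by linarith
      thus ?thesis using False Kd d_def by simp
    qed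
    have t2: "tmin \<le> (if gh (x (Suc n)) - gh (x n) = 0 then tau n
                         else \<mu>' * norm (x (Suc n) - x n) / norm (gh (x (Suc n)) - gh (x n)))"
    proof (cases "gh (x (Suc n)) - gh (x n) = 0")
      case True thus ?thesis using Suc by simp
    next
      case False
      have ng: "norm (gh (x (Suc n)) - gh (x n)) > 0" using False by simp
      have gl: "norm (gh (x (Suc n)) - gh (x n)) \<le> Lp * norm d"
        using gh_lip[of "x (Suc n)" "x n"] Lp(2) unfolding d_def
        by (meson mult_right_mono norm_ge_zero order_trans)
      have nd: "norm d > 0" using ng gl by (cases "norm d = 0") auto
      have "\<mu>' / Lp = \<mu>' * norm d / (Lp * norm d)" using nd by simp
      also have "\<dots> \<le> \<mu>' * norm d / norm (gh (x (Suc n)) - gh (x n))"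
        using gl ng nd mupos Lp by (intro divide_left_mono) auto
      finally have "tmin \<le> \<mu>' * norm d / norm (gh (x (Suc n)) - gh (x n))" unfolding tmin_def by linarith
      thus ?thesis using False d_def by simp
    qed
    show ?case using tau_step[of n] Suc t1 t2 by simp
  qed
  have tau_pos: "\<And>n. tau n > 0" using tau_lb tmin_pos by (meson less_le_trans)
  have "decseq tau" using tau_dec by (simp add: decseq_Suc_iff)
  then obtain tinf where tinf: "tau \<longlonglongrightarrow> tinf" using decseq_convergent[of tau tmin] tau_lb by blast
  have "tmin \<le> tinf" using tinf tau_lb by (intro LIMSEQ_le_const) auto
  hence tinf_pos: "tinf > 0" using tmin_pos by simp
  define vx where "vx n = z (Suc n) - tau n *\<^sub>R adjoint K (y n) - tau n *\<^sub>R gh (x n)" for n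
  have xmin: "\<forall>v. f (x (Suc n)) + ereal (norm (x (Suc n) - vx n)^2 / (2 * tau n))
                  \<le> f v + ereal (norm (v - vx n)^2 / (2 * tau n))" for n
  proof -
    have "x (Suc n) = prox (tau n) f (vx n)" using x_step[of n] unfolding vx_def .
    thus ?thesis unfolding prox_def
      using someI_ex[OF prox_exists[OF f_pcl tau_pos[of n], of "vx n"]] by simp
  qed
  have "\<exists>a. f (x (Suc n)) = ereal a \<and> (\<forall>v. ereal (a + inner (vx n - x (Suc n)) (v - x (Suc n)) / tau n) \<le> f v)" for n
    by (rule prox_opt[OF f_pcl(1,2) tau_pos xmin])
  then obtain Fx where Fx: "\<And>n. f (x (Suc n)) = ereal (Fx n)"
    and Fx2: "\<And>n v. ereal (Fx n + inner (vx n - x (Suc n)) (v - x (Suc n)) / tau n) \<le> f v" by metis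
  have Psub: "ereal (Fx n + inner (z (Suc n) - x (Suc n)) (v - x (Suc n)) / tau n
        - inner (adjoint K (y n) + gh (x n)) (v - x (Suc n))) \<le> f v" for n v
    using Fx2[of n v] unfolding vx_def prox_inner_conv[OF tau_pos] by (simp add: add_diff_eq)
  define vy where "vy n = (1 / (\<beta> * tau (Suc n))) *\<^sub>R y n + K (x (Suc n))" for n
  have sig_pos: "\<And>n. \<beta> * tau n > 0" using beta tau_pos by simp
  have lam_pos: "\<And>n. 1 / (\<beta> * tau n) > 0" using sig_pos by simp
  have wmin: "\<forall>v. g (w (Suc n)) + ereal (norm (w (Suc n) - vy n)^2 / (2 * (1 / (\<beta> * tau (Suc n)))))
                  \<le> g v + ereal (norm (v - vy n)^2 / (2 * (1 / (\<beta> * tau (Suc n)))))" for n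
  proof -
    have "w (Suc n) = prox (1 / (\<beta> * tau (Suc n))) g (vy n)" using w_step[of n] unfolding vy_def .
    thus ?thesis unfolding prox_def
      using someI_ex[OF prox_exists[OF g_pcl lam_pos[of "Suc n"], of "vy n"]] by simp
  qed
  have "\<exists>a. g (w (Suc n)) = ereal a \<and> (\<forall>v. ereal (a + inner (vy n - w (Suc n)) (v - w (Suc n)) / (1 / (\<beta> * tau (Suc n)))) \<le> g v)" for n
    by (rule prox_opt[OF g_pcl(1,2) lam_pos wmin])
  then obtain Ga where Ga: "\<And>n. g (w (Suc n)) = ereal (Ga n)"
    and Ga2: "\<And>n v. ereal (Ga n + inner (vy n - w (Suc n)) (v - w (Suc n)) / (1 / (\<beta> * tau (Suc n)))) \<le> g v" by metis
  have yv: "(\<beta> * tau (Suc n)) *\<^sub>R (vy n - w (Suc n)) = y (Suc n)" for n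
  proof -
    have "(\<beta> * tau (Suc n)) *\<^sub>R ((1 / (\<beta> * tau (Suc n))) *\<^sub>R y n) = y n" using beta tau_pos[of "Suc n"] by simp
    thus ?thesis unfolding vy_def y_step by (simp add: algebra_simps)
  qed
  have gsub: "\<forall>v. ereal (Ga n + inner (y (Suc n)) (v - w (Suc n))) \<le> g v" for n
  proof
    fix v
    have "inner (vy n - w (Suc n)) (v - w (Suc n)) / (1 / (\<beta> * tau (Suc n)))
        = inner ((\<beta> * tau (Suc n)) *\<^sub>R (vy n - w (Suc n))) (v - w (Suc n))" by simp
    thus "ereal (Ga n + inner (y (Suc n)) (v - w (Suc n))) \<le> g v" using Ga2[of n v] unfolding yv by simp
  qed
  define Gy where "Gy n = inner (y (Suc n)) (w (Suc n)) - Ga n" for n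
  have Gy: "\<And>n. fconj g (y (Suc n)) = ereal (Gy n)"
    unfolding Gy_def using fconj_at_subgrad(1)[OF Ga gsub] by blast
  have Dsub: "ereal (Gy n + inner (w (Suc n)) (yy - y (Suc n))) \<le> fconj g yy" for n yy
  proof -
    have "ereal (inner yy (w (Suc n)) - Ga n) \<le> fconj g yy" using fconj_at_subgrad(2)[OF Ga gsub] by blast
    moreover have "inner yy (w (Suc n)) - Ga n = Gy n + inner (w (Suc n)) (yy - y (Suc n))"
      unfolding Gy_def by (simp add: inner_diff_right inner_commute)
    ultimately show ?thesis by simp
  qed
  have Gnm: "fconj g yy \<noteq> -\<infinity>" for yy using Dsub[of 0 yy] by auto
  have wform: "w (Suc n) = K (x (Suc n)) - (1 / (\<beta> * tau (Suc n))) *\<^sub>R (y (Suc n) - y n)" for n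
  proof -
    have "(1 / (\<beta> * tau (Suc n))) *\<^sub>R (y (Suc n) - y n) = K (x (Suc n)) - w (Suc n)"
      unfolding y_step using beta tau_pos[of "Suc n"] by simp
    thus ?thesis by (simp add: algebra_simps)
  qed
  have SK: "tau (Suc n) * norm (K (x (Suc n)) - K (x n)) \<le> \<mu> / sqrt \<beta> * norm (x (Suc n) - x n)" for n
  proof (cases "K (x (Suc n)) - K (x n) = 0")
    case True thus ?thesis using mupos beta by simp
  next
    case False
    hence nK: "norm (K (x (Suc n)) - K (x n)) > 0" by simp
    have "tau (Suc n) \<le> \<mu> * norm (x (Suc n) - x n) / (sqrt \<beta> * norm (K (x (Suc n)) - K (x n)))"
      using tau_step[of n] False by simp
    hence "tau (Suc n) * norm (K (x (Suc n)) - K (x n))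
       \<le> \<mu> * norm (x (Suc n) - x n) / (sqrt \<beta> * norm (K (x (Suc n)) - K (x n))) * norm (K (x (Suc n)) - K (x n))"
      using nK by (intro mult_right_mono) auto
    also have "\<dots> = \<mu> / sqrt \<beta> * norm (x (Suc n) - x n)" using nK by simp
    finally show ?thesis .
  qed
  have SG: "tau (Suc n) * norm (gh (x (Suc n)) - gh (x n)) \<le> \<mu>' * norm (x (Suc n) - x n)" for n
  proof (cases "gh (x (Suc n)) - gh (x n) = 0")
    case True thus ?thesis using mupos by simp
  next
    case False
    hence nK: "norm (gh (x (Suc n)) - gh (x n)) > 0" by simp
    have "tau (Suc n) \<le> \<mu>' * norm (x (Suc n) - x n) / norm (gh (x (Suc n)) - gh (x n))"
      using tau_step[of n] False by simp
    hence "tau (Suc n) * norm (gh (x (Suc n)) - gh (x n))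
       \<le> \<mu>' * norm (x (Suc n) - x n) / norm (gh (x (Suc n)) - gh (x n)) * norm (gh (x (Suc n)) - gh (x n))"
      using nK by (intro mult_right_mono) auto
    also have "\<dots> = \<mu>' * norm (x (Suc n) - x n)" using nK by simp
    finally show ?thesis .
  qed
  have adj: "\<And>u yy. inner (adjoint K yy) u = inner yy (K u)"
    using adjoint_works[OF K_lin] by (simp add: inner_commute)
  define E where "E a b m = (\<psi>/(\<psi>-1)) * norm (z (Suc (Suc m)) - a)^2 + (1/\<beta>) * norm (y m - b)^2
      + \<mu>' * norm (x (Suc m) - x m)^2" for a b m
  define c1 where "c1 m = tau (Suc m)/tau m*\<psi> - tau (Suc m)/tau (Suc (Suc m))*\<mu> - 2*\<mu>'" for m
  define c2 where "c2 m = (1/\<beta>) - tau (Suc m)/tau (Suc (Suc m))*\<mu>*(1/\<beta>)" for m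
  define c3 where "c3 m = tau (Suc m)/tau m*\<psi>" for m
  define D1 where "D1 m = norm (x (Suc (Suc m)) - x (Suc m))^2" for m
  define D2 where "D2 m = norm (y (Suc m) - y m)^2" for m
  define D3 where "D3 m = norm (z (Suc (Suc m)) - x (Suc m))^2" for m
  have energy: "E a b (Suc m) + c1 m * D1 m + c2 m * D2 m + c3 m * D3 m \<le> E a b m"
    if sp: "saddle_point f h K g a b" for a b m
  proof -
    obtain fs Gs where fs: "f a = ereal fs" and Gs: "fconj g b = ereal Gs"
      and S1: "\<forall>xx aa. f xx = ereal aa \<longrightarrow> fs + h a + inner (K a) b \<le> aa + h xx + inner (K xx) b"
      and S2: "\<forall>yy c. fconj g yy = ereal c \<longrightarrow> Gs - inner (K a) b \<le> c - inner (K a) yy"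
      using saddle_real[OF sp nmf Fx[of 0] Gnm Gy[of 0]] by blast
    have A: "fs - Fx (Suc m) \<ge> inner (z (Suc (Suc m)) - x (Suc (Suc m))) (a - x (Suc (Suc m))) / tau (Suc m)
        - inner (adjoint K (y (Suc m)) + gh (x (Suc m))) (a - x (Suc (Suc m)))"
      using Psub[of "Suc m" a] fs by simp
    have B: "Fx (Suc m) - Fx m \<ge> inner (z (Suc m) - x (Suc m)) (x (Suc (Suc m)) - x (Suc m)) / tau m
        - inner (adjoint K (y m) + gh (x m)) (x (Suc (Suc m)) - x (Suc m))"
      using Psub[of m "x (Suc (Suc m))"] Fx[of "Suc m"] by simp
    have C: "Gs - Gy m \<ge> inner (K (x (Suc m)) - (1 / (\<beta> * tau (Suc m))) *\<^sub>R (y (Suc m) - y m)) (b - y (Suc m))"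
      using Dsub[of m b] Gs unfolding wform by simp
    have S1': "Fx m + h (x (Suc m)) + inner (K (x (Suc m))) b \<ge> fs + h a + inner (K a) b"
      using S1 Fx[of m] by blast
    have S2': "Gy m - inner (K a) (y (Suc m)) \<ge> Gs - inner (K a) b"
      using S2 Gy[of m] by blast
    have H: "h a \<ge> h (x (Suc m)) + inner (gh (x (Suc m))) (a - x (Suc m))"
      by (rule convex_grad_ineq[OF h_conv h_grad])
    have I0: "inner (z (Suc (Suc m)) - x (Suc (Suc m))) (a - x (Suc (Suc m))) / tau (Suc m)
        + inner (z (Suc m) - x (Suc m)) (x (Suc (Suc m)) - x (Suc m)) / tau m
        + (1 / (\<beta> * tau (Suc m))) * inner (y m - y (Suc m)) (b - y (Suc m))
        + inner (y (Suc m) - y m) (K (x (Suc (Suc m))) - K (x (Suc m)))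
        + inner (gh (x (Suc m)) - gh (x m)) (x (Suc (Suc m)) - x (Suc m)) \<le> 0"
      by (rule sum_step[OF adj K_lin A B C S1' S2' H])
    have zb: "z (Suc (Suc m)) = ((\<psi>-1)/\<psi>) *\<^sub>R x (Suc m) + (1/\<psi>) *\<^sub>R z (Suc m)" by (rule z_step)
    have zc: "z (Suc (Suc (Suc m))) = ((\<psi>-1)/\<psi>) *\<^sub>R x (Suc (Suc m)) + (1/\<psi>) *\<^sub>R z (Suc (Suc m))" by (rule z_step)
    have pos: "tau m > 0" "tau (Suc m) > 0" "tau (Suc (Suc m)) > 0" "\<beta> > 0" "\<psi> > 1" "\<psi>^2 \<le> \<psi> + 1"
      "tau (Suc m) \<le> tau m" "\<mu> \<ge> 0" "\<mu>' \<ge> 0"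
      using tau_pos beta psi psi2 tau_dec mupos by auto
    show ?thesis
      using energy_step[OF I0 zb zc SK[of "Suc m"] SG[of m] pos]
      unfolding E_def c1_def c2_def c3_def D1_def D2_def D3_def by simp
  qed
  have tS: "(\<lambda>m. tau (Suc m)) \<longlonglongrightarrow> tinf" using tinf by (rule LIMSEQ_Suc)
  have tSS: "(\<lambda>m. tau (Suc (Suc m))) \<longlonglongrightarrow> tinf" using tS by (rule LIMSEQ_Suc)
  have rat1: "(\<lambda>m. tau (Suc m)/tau m) \<longlonglongrightarrow> 1"
    using tendsto_divide[OF tS tinf] tinf_pos by simp
  have rat2: "(\<lambda>m. tau (Suc m)/tau (Suc (Suc m))) \<longlonglongrightarrow> 1"
    using tendsto_divide[OF tS tSS] tinf_pos by simp
  have lc1: "c1 \<longlonglongrightarrow> 1*\<psi> - 1*\<mu> - 2*\<mu>'" unfolding c1_def by (intro tendsto_intros rat1 rat2)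
  have lc2: "c2 \<longlonglongrightarrow> (1/\<beta>) - 1*\<mu>*(1/\<beta>)" unfolding c2_def by (intro tendsto_intros rat2)
  have lc3: "c3 \<longlonglongrightarrow> 1*\<psi>" unfolding c3_def by (intro tendsto_intros rat1)
  define mm where "mm = min (\<psi> - \<mu> - 2*\<mu>') (min ((1/\<beta>) - \<mu>*(1/\<beta>)) \<psi>)"
  define \<delta> where "\<delta> = mm / 2"
  have l1: "\<psi> - \<mu> - 2*\<mu>' > 0" using mu by linarith
  have "(1/\<beta>) - \<mu>*(1/\<beta>) = (1 - \<mu>)/\<beta>" using beta by (simp add: field_simps)
  hence l2: "(1/\<beta>) - \<mu>*(1/\<beta>) > 0" using mu1 beta by simp
  have "mm > 0" unfolding mm_def using l1 l2 psi by simp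
  hence \<delta>pos: "\<delta> > 0" unfolding \<delta>_def by simp
  have m1: "mm \<le> \<psi> - \<mu> - 2*\<mu>'" unfolding mm_def by simp
  have m2: "mm \<le> (1/\<beta>) - \<mu>*(1/\<beta>)" unfolding mm_def by simp
  have m3: "mm \<le> \<psi>" unfolding mm_def by simp
  have d1: "\<delta> < \<psi> - \<mu> - 2*\<mu>'" using m1 l1 unfolding \<delta>_def by linarith
  have d2: "\<delta> < (1/\<beta>) - \<mu>*(1/\<beta>)" using m2 l2 unfolding \<delta>_def by linarith
  have d3: "\<delta> < \<psi>" using m3 psi unfolding \<delta>_def by linarith
  have lc1': "c1 \<longlonglongrightarrow> \<psi> - \<mu> - 2*\<mu>'" using lc1 by simp
  have lc2': "c2 \<longlonglongrightarrow> (1/\<beta>) - \<mu>*(1/\<beta>)" using lc2 by simp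
  have lc3': "c3 \<longlonglongrightarrow> \<psi>" using lc3 by simp
  have e1: "eventually (\<lambda>m. \<delta> < c1 m) sequentially" by (rule order_tendstoD(1)[OF lc1' d1])
  have e2: "eventually (\<lambda>m. \<delta> < c2 m) sequentially" by (rule order_tendstoD(1)[OF lc2' d2])
  have e3: "eventually (\<lambda>m. \<delta> < c3 m) sequentially" by (rule order_tendstoD(1)[OF lc3' d3])
  have Dnn: "D1 m \<ge> 0" "D2 m \<ge> 0" "D3 m \<ge> 0" for m unfolding D1_def D2_def D3_def by auto
  have Dcomb: "eventually (\<lambda>m. E a b (Suc m) + \<delta> * (D1 m + D2 m + D3 m) \<le> E a b m) sequentially"
    if sp: "saddle_point f h K g a b" for a b
    using e1 e2 e3
  proof eventually_elim
    case (elim m)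
    have "\<delta> * D1 m \<le> c1 m * D1 m" "\<delta> * D2 m \<le> c2 m * D2 m" "\<delta> * D3 m \<le> c3 m * D3 m"
      using elim Dnn[of m] by (auto intro: mult_right_mono)
    thus ?case using energy[OF sp, of m] by (simp add: algebra_simps)
  qed
  have psi_c: "\<psi>/(\<psi>-1) > 0" using psi by simp
  have Enn: "E a b m \<ge> 0" for a b m
  proof -
    have "0 \<le> (\<psi>/(\<psi>-1)) * norm (z (Suc (Suc m)) - a)^2" using psi_c by (intro mult_nonneg_nonneg) auto
    moreover have "0 \<le> (1/\<beta>) * norm (y m - b)^2" using beta by simp
    moreover have "0 \<le> \<mu>' * norm (x (Suc m) - x m)^2" using mupos by simp
    ultimately show ?thesis unfolding E_def by linarith
  qed
  have dnn: "\<delta> * (D1 m + D2 m + D3 m) \<ge> 0" for m using \<delta>pos Dnn[of m] by simp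
  obtain xs ys where sp0: "saddle_point f h K g xs ys" using A1_sol by blast
  have Econv0: "convergent (E xs ys)" and dlim: "(\<lambda>m. \<delta> * (D1 m + D2 m + D3 m)) \<longlonglongrightarrow> 0"
    using fejer_conv[OF Dcomb[OF sp0] dnn Enn] by auto
  have "(\<lambda>m. (\<delta> * (D1 m + D2 m + D3 m)) / \<delta>) \<longlonglongrightarrow> 0 / \<delta>" by (intro tendsto_intros dlim) (use \<delta>pos in simp)
  hence Dsum: "(\<lambda>m. D1 m + D2 m + D3 m) \<longlonglongrightarrow> 0" using \<delta>pos by simp
  have D1lim: "D1 \<longlonglongrightarrow> 0"
    by (rule tendsto_sandwich[OF always_eventually always_eventually tendsto_const Dsum]) (use Dnn in auto)
  have D2lim: "D2 \<longlonglongrightarrow> 0"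
    by (rule tendsto_sandwich[OF always_eventually always_eventually tendsto_const Dsum]) (use Dnn in auto)
  have D3lim: "D3 \<longlonglongrightarrow> 0"
    by (rule tendsto_sandwich[OF always_eventually always_eventually tendsto_const Dsum]) (use Dnn in auto)
  obtain ME where ME: "\<And>m. E xs ys m \<le> ME"
  proof -
    have "Bseq (E xs ys)" using Econv0 by (rule convergent_imp_Bseq)
    then obtain Kb where Kb: "\<And>n. norm (E xs ys n) \<le> Kb" using BseqE by metis
    have "E xs ys m \<le> Kb" for m using Kb[of m] abs_ge_self[of "E xs ys m"] by simp
    thus ?thesis by (rule that)
  qed
  obtain M3 where M3: "\<And>m. D3 m \<le> M3"
  proof -
    have "Bseq D3" using D3lim by (intro convergent_imp_Bseq) (auto simp: convergent_def)
    then obtain Kb where Kb: "\<And>n. norm (D3 n) \<le> Kb" using BseqE by metis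
    have "D3 m \<le> Kb" for m using Kb[of m] abs_ge_self[of "D3 m"] by simp
    thus ?thesis by (rule that)
  qed
  have psi1: "1 \<le> \<psi>/(\<psi>-1)" using psi by (simp add: field_simps)
  have zbd: "norm (z (Suc (Suc m)) - xs) \<le> max 1 ME" for m
  proof (rule norm_sq_le_max)
    have "norm (z (Suc (Suc m)) - xs)^2 \<le> (\<psi>/(\<psi>-1)) * norm (z (Suc (Suc m)) - xs)^2"
      using mult_right_mono[OF psi1, of "norm (z (Suc (Suc m)) - xs)^2"] by simp
    also have "\<dots> \<le> E xs ys m" unfolding E_def using beta mupos by simp
    finally show "norm (z (Suc (Suc m)) - xs)^2 \<le> ME" using ME[of m] by linarith
  qed
  have ybd: "norm (y m - ys) \<le> max 1 (\<beta> * ME)" for m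
  proof (rule norm_sq_le_max)
    have "0 \<le> (\<psi>/(\<psi>-1)) * norm (z (Suc (Suc m)) - xs)^2" using psi_c by (intro mult_nonneg_nonneg) auto
    moreover have "0 \<le> \<mu>' * norm (x (Suc m) - x m)^2" using mupos by simp
    ultimately have "(1/\<beta>) * norm (y m - ys)^2 \<le> E xs ys m" unfolding E_def by linarith
    hence "(1/\<beta>) * norm (y m - ys)^2 \<le> ME" using ME[of m] by linarith
    hence "\<beta> * ((1/\<beta>) * norm (y m - ys)^2) \<le> \<beta> * ME" using beta by (intro mult_left_mono) auto
    thus "norm (y m - ys)^2 \<le> \<beta> * ME" using beta by simp
  qed
  have dbd: "norm (z (Suc (Suc m)) - x (Suc m)) \<le> max 1 M3" for m
    using norm_sq_le_max[of "z (Suc (Suc m)) - x (Suc m)" M3] M3[of m] unfolding D3_def by simp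
  have xbd: "norm (x (Suc m)) \<le> norm xs + max 1 ME + max 1 M3" for m
  proof -
    have e: "norm (x (Suc m)) = norm (xs + (z (Suc (Suc m)) - xs) - (z (Suc (Suc m)) - x (Suc m)))" by simp
    have t1: "norm (xs + (z (Suc (Suc m)) - xs) - (z (Suc (Suc m)) - x (Suc m)))
        \<le> norm (xs + (z (Suc (Suc m)) - xs)) + norm (z (Suc (Suc m)) - x (Suc m))" by (rule norm_triangle_ineq4)
    have t2: "norm (xs + (z (Suc (Suc m)) - xs)) \<le> norm xs + norm (z (Suc (Suc m)) - xs)" by (rule norm_triangle_ineq)
    have "norm (x (Suc m)) \<le> norm xs + norm (z (Suc (Suc m)) - xs) + norm (z (Suc (Suc m)) - x (Suc m))"
      using e t1 t2 by linarith
    thus ?thesis using zbd[of m] dbd[of m] by linarith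
  qed
  have ybd2: "norm (y (Suc m)) \<le> norm ys + max 1 (\<beta> * ME)" for m
  proof -
    have "norm (y (Suc m)) \<le> norm ys + norm (y (Suc m) - ys)" using norm_triangle_sub[of "y (Suc m)" ys] by simp
    thus ?thesis using ybd[of "Suc m"] by linarith
  qed
  have bnd: "bounded (range (\<lambda>m. (x (Suc m), y (Suc m))))"
    unfolding bounded_iff
  proof (intro exI ballI)
    fix p assume "p \<in> range (\<lambda>m. (x (Suc m), y (Suc m)))"
    then obtain m where p: "p = (x (Suc m), y (Suc m))" by auto
    have "norm p \<le> norm (x (Suc m)) + norm (y (Suc m))" unfolding p by (rule norm_Pair_le)
    thus "norm p \<le> (norm xs + max 1 ME + max 1 M3) + (norm ys + max 1 (\<beta> * ME))"
      using xbd[of m] ybd2[of m] by linarith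
  qed
  obtain l r where r: "strict_mono r" and lim: "((\<lambda>m. (x (Suc m), y (Suc m))) \<circ> r) \<longlonglongrightarrow> l"
    using bounded_imp_convergent_subsequence[OF bnd] by blast
  obtain xh yh where l: "l = (xh, yh)" by (cases l)
  have xr: "(\<lambda>k. x (Suc (r k))) \<longlonglongrightarrow> xh" using tendsto_fst[OF lim] unfolding l comp_def by simp
  have yr: "(\<lambda>k. y (Suc (r k))) \<longlonglongrightarrow> yh" using tendsto_snd[OF lim] unfolding l comp_def by simp
  have sub0: "(\<lambda>k. X (r k)) \<longlonglongrightarrow> 0" if "X \<longlonglongrightarrow> 0" for X :: "nat \<Rightarrow> real"
    using LIMSEQ_subseq_LIMSEQ[OF that r] unfolding comp_def .
  have dx: "(\<lambda>k. x (Suc (Suc (r k))) - x (Suc (r k))) \<longlonglongrightarrow> 0"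
    by (rule sq_to_zero) (use sub0[OF D1lim] in \<open>simp add: D1_def\<close>)
  have xr2: "(\<lambda>k. x (Suc (Suc (r k)))) \<longlonglongrightarrow> xh" using tendsto_add[OF xr dx] by simp
  have dy: "(\<lambda>k. y (Suc (r k)) - y (r k)) \<longlonglongrightarrow> 0"
    by (rule sq_to_zero) (use sub0[OF D2lim] in \<open>simp add: D2_def\<close>)
  have yr0: "(\<lambda>k. y (r k)) \<longlonglongrightarrow> yh" using tendsto_diff[OF yr dy] by simp
  have dz: "(\<lambda>k. z (Suc (Suc (r k))) - x (Suc (r k))) \<longlonglongrightarrow> 0"
    by (rule sq_to_zero) (use sub0[OF D3lim] in \<open>simp add: D3_def\<close>)
  have zr2: "(\<lambda>k. z (Suc (Suc (r k)))) \<longlonglongrightarrow> xh" using tendsto_add[OF xr dz] by simp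
  have tr: "(\<lambda>k. tau (Suc (r k))) \<longlonglongrightarrow> tinf" using LIMSEQ_subseq_LIMSEQ[OF tS r] unfolding comp_def .
  have blK: "bounded_linear K" using K_lin by (simp add: linear_conv_bounded_linear)
  have blKt: "bounded_linear (adjoint K)" using adjoint_linear[OF K_lin] by (simp add: linear_conv_bounded_linear)
  obtain u0 where "f u0 < \<infinity>" using f_pcl(1) unfolding proper_fun_def by auto
  then obtain cu0 where cu0: "f u0 = ereal cu0" using nmf by (cases "f u0") auto
  have prim: "f xh \<le> ereal (cu + inner (adjoint K yh + gh xh) (u - xh))" if fu: "f u = ereal cu" for u cu
  proof -
    define Bk where "Bk k = cu - inner (z (Suc (Suc (r k))) - x (Suc (Suc (r k)))) (u - x (Suc (Suc (r k)))) / tau (Suc (r k))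
       + inner (adjoint K (y (Suc (r k))) + gh (x (Suc (r k)))) (u - x (Suc (Suc (r k))))" for k
    have ev: "eventually (\<lambda>k. f (x (Suc (Suc (r k)))) \<le> ereal (Bk k)) sequentially"
    proof (rule always_eventually, rule allI)
      fix k
      show "f (x (Suc (Suc (r k)))) \<le> ereal (Bk k)"
        using Psub[of "Suc (r k)" u] Fx[of "Suc (r k)"] fu unfolding Bk_def by simp
    qed
    have "Bk \<longlonglongrightarrow> cu - inner (xh - xh) (u - xh) / tinf + inner (adjoint K yh + gh xh) (u - xh)"
      unfolding Bk_def
      by (intro tendsto_intros zr2 xr2 tr yr bounded_linear.tendsto[OF blKt yr] lip_tendsto[OF gh_lip xr])
        (use tinf_pos in simp)
    hence "Bk \<longlonglongrightarrow> cu + inner (adjoint K yh + gh xh) (u - xh)" by simp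
    thus ?thesis by (rule lsc_seq[OF f_pcl(3) xr2 ev])
  qed
  obtain ah where fah: "f xh = ereal ah" using prim[OF cu0] nmf by (cases "f xh") auto
  have sf: "\<forall>u. ereal (ah - inner yh (K u - K xh) - inner (gh xh) (u - xh)) \<le> f u"
  proof
    fix u
    show "ereal (ah - inner yh (K u - K xh) - inner (gh xh) (u - xh)) \<le> f u"
    proof (cases "f u")
      case (real cu)
      have "inner (adjoint K yh + gh xh) (u - xh) = inner yh (K u - K xh) + inner (gh xh) (u - xh)"
        by (simp add: inner_add_left adj linear_diff[OF K_lin])
      thus ?thesis using prim[OF real] fah real by simp
    qed (use nmf in auto)
  qed
  have wr: "(\<lambda>k. w (Suc (r k))) \<longlonglongrightarrow> K xh"
  proof -
    have "(\<lambda>k. K (x (Suc (r k))) - (1 / (\<beta> * tau (Suc (r k)))) *\<^sub>R (y (Suc (r k)) - y (r k)))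
        \<longlonglongrightarrow> K xh - (1 / (\<beta> * tinf)) *\<^sub>R 0"
      by (intro tendsto_intros bounded_linear.tendsto[OF blK xr] tr dy) (use tinf_pos beta in simp)
    thus ?thesis unfolding wform by simp
  qed
  have dual: "fconj g yh \<le> ereal (c - inner (K xh) (yy - yh))" if fy: "fconj g yy = ereal c" for yy c
  proof -
    define Bk where "Bk k = c - inner (w (Suc (r k))) (yy - y (Suc (r k)))" for k
    have ev: "eventually (\<lambda>k. fconj g (y (Suc (r k))) \<le> ereal (Bk k)) sequentially"
    proof (rule always_eventually, rule allI)
      fix k
      show "fconj g (y (Suc (r k))) \<le> ereal (Bk k)"
        using Dsub[of "r k" yy] Gy[of "r k"] fy unfolding Bk_def by simp
    qed
    have "Bk \<longlonglongrightarrow> c - inner (K xh) (yy - yh)" unfolding Bk_def by (intro tendsto_intros wr yr)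
    thus ?thesis by (rule fconj_lsc_seq[OF nmg yr ev])
  qed
  obtain Gh where Gh: "fconj g yh = ereal Gh" using dual[OF Gy[of 0]] Gnm[of yh] by (cases "fconj g yh") auto
  have sg: "\<forall>yy. ereal (Gh + inner (K xh) (yy - yh)) \<le> fconj g yy"
  proof
    fix yy
    show "ereal (Gh + inner (K xh) (yy - yh)) \<le> fconj g yy"
    proof (cases "fconj g yy")
      case (real c)
      thus ?thesis using dual[OF real] Gh by simp
    qed (use Gnm in auto)
  qed
  have hg: "\<forall>u. h xh + inner (gh xh) (u - xh) \<le> h u" using convex_grad_ineq[OF h_conv h_grad] by blast
  have sph: "saddle_point f h K g xh yh" by (rule saddle_from_subgrad[OF K_lin fah Gh sf sg hg])
  have Econv: "convergent (E xh yh)" using fejer_conv[OF Dcomb[OF sph] dnn Enn] by auto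
  define D0 where "D0 m = norm (x (Suc m) - x m)^2" for m
  have "(\<lambda>m. D0 (Suc m)) \<longlonglongrightarrow> 0" using D1lim unfolding D1_def D0_def by simp
  hence D0lim: "D0 \<longlonglongrightarrow> 0" by (rule LIMSEQ_imp_Suc)
  have "(\<lambda>k. (\<psi>/(\<psi>-1)) * norm (z (Suc (Suc (r k))) - xh)^2 + (1/\<beta>) * norm (y (r k) - yh)^2 + \<mu>' * D0 (r k))
      \<longlonglongrightarrow> (\<psi>/(\<psi>-1)) * norm (xh - xh)^2 + (1/\<beta>) * norm (yh - yh)^2 + \<mu>' * 0"
    by (intro tendsto_intros zr2 yr0 sub0[OF D0lim])
  hence Er: "(\<lambda>k. E xh yh (r k)) \<longlonglongrightarrow> 0" unfolding E_def D0_def by simp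
  have "E xh yh \<longlonglongrightarrow> lim (E xh yh)" using Econv by (simp add: convergent_LIMSEQ_iff)
  moreover have "(\<lambda>k. E xh yh (r k)) \<longlonglongrightarrow> lim (E xh yh)"
    using LIMSEQ_subseq_LIMSEQ[OF calculation r] unfolding comp_def .
  ultimately have E0: "E xh yh \<longlonglongrightarrow> 0" using Er LIMSEQ_unique by metis
  have Ep1: "norm (z (Suc (Suc m)) - xh)^2 \<le> E xh yh m" for m
  proof -
    have "norm (z (Suc (Suc m)) - xh)^2 \<le> (\<psi>/(\<psi>-1)) * norm (z (Suc (Suc m)) - xh)^2"
      using mult_right_mono[OF psi1, of "norm (z (Suc (Suc m)) - xh)^2"] by simp
    moreover have "0 \<le> (1/\<beta>) * norm (y m - yh)^2" using beta by simp
    moreover have "0 \<le> \<mu>' * norm (x (Suc m) - x m)^2" using mupos by simp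
    ultimately show ?thesis unfolding E_def by linarith
  qed
  have Ep2: "norm (y m - yh)^2 \<le> \<beta> * E xh yh m" for m
  proof -
    have "0 \<le> (\<psi>/(\<psi>-1)) * norm (z (Suc (Suc m)) - xh)^2" using psi_c by (intro mult_nonneg_nonneg) auto
    moreover have "0 \<le> \<mu>' * norm (x (Suc m) - x m)^2" using mupos by simp
    ultimately have "(1/\<beta>) * norm (y m - yh)^2 \<le> E xh yh m" unfolding E_def by linarith
    hence "\<beta> * ((1/\<beta>) * norm (y m - yh)^2) \<le> \<beta> * E xh yh m" using beta by (intro mult_left_mono) auto
    thus ?thesis using beta by simp
  qed
  have "(\<lambda>m. norm (z (Suc (Suc m)) - xh)^2) \<longlonglongrightarrow> 0"
    by (rule tendsto_sandwich[OF always_eventually always_eventually tendsto_const E0]) (use Ep1 in auto)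
  hence "(\<lambda>m. z (Suc (Suc m)) - xh) \<longlonglongrightarrow> 0" by (rule sq_to_zero)
  hence zl: "(\<lambda>m. z (Suc (Suc m))) \<longlonglongrightarrow> xh" by (rule LIM_zero_cancel)
  have bE0: "(\<lambda>m. \<beta> * E xh yh m) \<longlonglongrightarrow> 0" using tendsto_mult[OF tendsto_const[of \<beta>] E0] by simp
  have "(\<lambda>m. norm (y m - yh)^2) \<longlonglongrightarrow> 0"
    by (rule tendsto_sandwich[OF always_eventually always_eventually tendsto_const bE0]) (use Ep2 in auto)
  hence "(\<lambda>m. y m - yh) \<longlonglongrightarrow> 0" by (rule sq_to_zero)
  hence ylim: "y \<longlonglongrightarrow> yh" by (rule LIM_zero_cancel)
  have d3: "(\<lambda>m. z (Suc (Suc m)) - x (Suc m)) \<longlonglongrightarrow> 0"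
    by (rule sq_to_zero) (use D3lim in \<open>unfold D3_def[abs_def]\<close>)
  have "(\<lambda>m. z (Suc (Suc m)) - (z (Suc (Suc m)) - x (Suc m))) \<longlonglongrightarrow> xh - 0"
    by (intro tendsto_intros zl d3)
  hence "(\<lambda>m. x (Suc m)) \<longlonglongrightarrow> xh" by simp
  hence xlim: "x \<longlonglongrightarrow> xh" by (rule LIMSEQ_imp_Suc)
  show ?thesis using sph tendsto_Pair[OF xlim ylim] by blast
qed

end
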